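(* Let $\varphi\colon\Gamma\to K$ be a surjective homomorphism of discrete groups with kernel $H$. Then the following are equivalent: (1) for every normed $\mathbb{R}[\Gamma]$-module $V$, the inflation map $H^\bullet_b(\varphi;\mathrm{I}_V)\colon H^\bullet_b(K;V^H)\to H^\bullet_b(\Gamma;V)$ is an isometric isomorphism in all degrees; (2) for every Banach $\Gamma$-module $V$, the inflation map $H^1_b(\varphi;\mathrm{I}_V)\colon H^1_b(K;V^H)\to H^1_b(\Gamma;V)$ is an isomorphism; (3) $H$ is finite.
   Context: A normed $\mathbb{R}[\Gamma]$-module is a normed real vector space with an action of $\Gamma$ by $\mathbb{R}$-linear isometries; a Banach $\Gamma$-module is a complete one. The bounded cohomology $H^\bullet_b(\Gamma;V)$ is the cohomology of the complex $C^\bullet_b(\Gamma;V)^\Gamma$ of $\Gamma$-invariant bounded functions $\Gamma^{\bullet+1}\to V$ (with $\Gamma$ acting by $(g\cdot f)(g_0,\dots,g_\bullet)=g f(g^{-1}g_0,\dots,g^{-1}g_\bullet)$ and the usual homogeneous coboundary), endowed with the seminorm induced by the $\ell^\infty$-norm; "isometric" means preserving this seminorm. For $H=\ker\varphi$, the $H$-fixed subspace $V^H$ is a normed $\mathbb{R}[K]$-module, and the inflation map $H^\bullet_b(\varphi;\mathrm{I}_V)$ is induced by restriction along $\varphi$ together with the inclusion $\mathrm{I}_V\colon V^H\to V$. *)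

theory Defs
  imports Complex_Main "HOL-Algebra.Coset"
begin

text \<open>The group is a HOL-Algebra group with carrier; modules carry explicit operations so
  that one can quantify over modules inside a formula.\<close>

record ('g, 'v) gmod =
  vcarrier :: "'v set"
  vzero    :: 'v
  vadd     :: "'v \<Rightarrow> 'v \<Rightarrow> 'v"
  vscale   :: "real \<Rightarrow> 'v \<Rightarrow> 'v"
  vnorm    :: "'v \<Rightarrow> real"
  act      :: "'g \<Rightarrow> 'v \<Rightarrow> 'v"

definition vsub :: "('g, 'v) gmod \<Rightarrow> 'v \<Rightarrow> 'v \<Rightarrow> 'v" where
  "vsub V u w = vadd V u (vscale V (-1) w)"

definition normed_space :: "('g, 'v) gmod \<Rightarrow> bool" where
  "normed_space V \<longleftrightarrow>
     vzero V \<in> vcarrier V \<and>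
     (\<forall>u\<in>vcarrier V. \<forall>w\<in>vcarrier V. vadd V u w \<in> vcarrier V) \<and>
     (\<forall>a. \<forall>u\<in>vcarrier V. vscale V a u \<in> vcarrier V) \<and>
     (\<forall>u\<in>vcarrier V. \<forall>w\<in>vcarrier V. \<forall>x\<in>vcarrier V.
        vadd V (vadd V u w) x = vadd V u (vadd V w x)) \<and>
     (\<forall>u\<in>vcarrier V. \<forall>w\<in>vcarrier V. vadd V u w = vadd V w u) \<and>
     (\<forall>u\<in>vcarrier V. vadd V u (vzero V) = u) \<and>
     (\<forall>u\<in>vcarrier V. vadd V u (vscale V (-1) u) = vzero V) \<and>
     (\<forall>a b. \<forall>u\<in>vcarrier V. vscale V a (vscale V b u) = vscale V (a * b) u) \<and>
     (\<forall>u\<in>vcarrier V. vscale V 1 u = u) \<and>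
     (\<forall>a b. \<forall>u\<in>vcarrier V. vscale V (a + b) u = vadd V (vscale V a u) (vscale V b u)) \<and>
     (\<forall>a. \<forall>u\<in>vcarrier V. \<forall>w\<in>vcarrier V.
        vscale V a (vadd V u w) = vadd V (vscale V a u) (vscale V a w)) \<and>
     (\<forall>u\<in>vcarrier V. 0 \<le> vnorm V u) \<and>
     (\<forall>u\<in>vcarrier V. vnorm V u = 0 \<longleftrightarrow> u = vzero V) \<and>
     (\<forall>a. \<forall>u\<in>vcarrier V. vnorm V (vscale V a u) = \<bar>a\<bar> * vnorm V u) \<and>
     (\<forall>u\<in>vcarrier V. \<forall>w\<in>vcarrier V. vnorm V (vadd V u w) \<le> vnorm V u + vnorm V w)"

definition complete_vs :: "('g, 'v) gmod \<Rightarrow> bool" where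
  "complete_vs V \<longleftrightarrow>
     (\<forall>X :: nat \<Rightarrow> 'v. (\<forall>i. X i \<in> vcarrier V) \<and>
        (\<forall>e>0. \<exists>N. \<forall>m\<ge>N. \<forall>n\<ge>N. vnorm V (vsub V (X m) (X n)) < e)
      \<longrightarrow> (\<exists>L\<in>vcarrier V. (\<lambda>i. vnorm V (vsub V (X i) L)) \<longlonglongrightarrow> 0))"

definition normed_gmod :: "('g, 'b) monoid_scheme \<Rightarrow> ('g, 'v) gmod \<Rightarrow> bool" where
  "normed_gmod G V \<longleftrightarrow> normed_space V \<and>
     (\<forall>g\<in>carrier G. \<forall>u\<in>vcarrier V. act V g u \<in> vcarrier V \<and> vnorm V (act V g u) = vnorm V u) \<and>
     (\<forall>g\<in>carrier G. \<forall>u\<in>vcarrier V. \<forall>w\<in>vcarrier V.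
        act V g (vadd V u w) = vadd V (act V g u) (act V g w)) \<and>
     (\<forall>g\<in>carrier G. \<forall>a. \<forall>u\<in>vcarrier V. act V g (vscale V a u) = vscale V a (act V g u)) \<and>
     (\<forall>u\<in>vcarrier V. act V \<one>\<^bsub>G\<^esub> u = u) \<and>
     (\<forall>g\<in>carrier G. \<forall>h\<in>carrier G. \<forall>u\<in>vcarrier V.
        act V (g \<otimes>\<^bsub>G\<^esub> h) u = act V g (act V h u))"

definition banach_gmod :: "('g, 'b) monoid_scheme \<Rightarrow> ('g, 'v) gmod \<Rightarrow> bool" where
  "banach_gmod G V \<longleftrightarrow> normed_gmod G V \<and> complete_vs V"

definition tuples :: "('g, 'b) monoid_scheme \<Rightarrow> nat \<Rightarrow> 'g list set" where
  "tuples G n = {xs. length xs = Suc n \<and> set xs \<subseteq> carrier G}"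

fun vsum :: "('g, 'v) gmod \<Rightarrow> 'v list \<Rightarrow> 'v" where
  "vsum V [] = vzero V"
| "vsum V (v # vs) = vadd V v (vsum V vs)"

definition cobound :: "('g, 'v) gmod \<Rightarrow> ('g list \<Rightarrow> 'v) \<Rightarrow> 'g list \<Rightarrow> 'v" where
  "cobound V f xs = vsum V (map (\<lambda>i. vscale V ((-1) ^ i) (f (take i xs @ drop (Suc i) xs)))
                               [0..<length xs])"

text \<open>G-invariant bounded n-cochains: \<open>g f(g^-1 x) = f(x)\<close>, i.e. \<open>f(g x) = g f(x)\<close>.\<close>
definition Cb :: "('g, 'b) monoid_scheme \<Rightarrow> ('g, 'v) gmod \<Rightarrow> nat \<Rightarrow> ('g list \<Rightarrow> 'v) set" where
  "Cb G V n = {f. (\<forall>xs\<in>tuples G n. f xs \<in> vcarrier V) \<and>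
                  (\<exists>C. \<forall>xs\<in>tuples G n. vnorm V (f xs) \<le> C) \<and>
                  (\<forall>g\<in>carrier G. \<forall>xs\<in>tuples G n. f (map ((\<otimes>\<^bsub>G\<^esub>) g) xs) = act V g (f xs))}"

definition Zb :: "('g, 'b) monoid_scheme \<Rightarrow> ('g, 'v) gmod \<Rightarrow> nat \<Rightarrow> ('g list \<Rightarrow> 'v) set" where
  "Zb G V n = {f \<in> Cb G V n. \<forall>xs\<in>tuples G (Suc n). cobound V f xs = vzero V}"

definition is_cobdry :: "('g, 'b) monoid_scheme \<Rightarrow> ('g, 'v) gmod \<Rightarrow> nat \<Rightarrow> ('g list \<Rightarrow> 'v) \<Rightarrow> bool" where
  "is_cobdry G V n f \<longleftrightarrow>
     (case n of 0 \<Rightarrow> (\<forall>xs\<in>tuples G 0. f xs = vzero V)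
              | Suc m \<Rightarrow> (\<exists>b\<in>Cb G V m. \<forall>xs\<in>tuples G n. f xs = cobound V b xs))"

definition cohomologous :: "('g, 'b) monoid_scheme \<Rightarrow> ('g, 'v) gmod \<Rightarrow> nat \<Rightarrow> ('g list \<Rightarrow> 'v) \<Rightarrow> ('g list \<Rightarrow> 'v) \<Rightarrow> bool" where
  "cohomologous G V n f f' \<longleftrightarrow> is_cobdry G V n (\<lambda>xs. vsub V (f xs) (f' xs))"

definition supnorm :: "('g, 'b) monoid_scheme \<Rightarrow> ('g, 'v) gmod \<Rightarrow> nat \<Rightarrow> ('g list \<Rightarrow> 'v) \<Rightarrow> real" where
  "supnorm G V n f = (SUP xs\<in>tuples G n. vnorm V (f xs))"

definition hb_norm :: "('g, 'b) monoid_scheme \<Rightarrow> ('g, 'v) gmod \<Rightarrow> nat \<Rightarrow> ('g list \<Rightarrow> 'v) \<Rightarrow> real" where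
  "hb_norm G V n f = (INF f'\<in>{f' \<in> Cb G V n. cohomologous G V n f f'}. supnorm G V n f')"

text \<open>\<open>V^H\<close> for \<open>H = ker \<phi>\<close>, as a K-module: k acts as any preimage g of k.\<close>
definition fixmod :: "('g, 'b) monoid_scheme \<Rightarrow> ('k, 'c) monoid_scheme \<Rightarrow> ('g \<Rightarrow> 'k)
                       \<Rightarrow> ('g, 'v) gmod \<Rightarrow> ('k, 'v) gmod" where
  "fixmod G K \<phi> V =
     \<lparr> vcarrier = {u \<in> vcarrier V. \<forall>h\<in>kernel G K \<phi>. act V h u = u},
       vzero = vzero V, vadd = vadd V, vscale = vscale V, vnorm = vnorm V,
       act = (\<lambda>k u. act V (SOME g. g \<in> carrier G \<and> \<phi> g = k) u) \<rparr>"

text \<open>Inflation on cochains: restriction along \<phi> composed with the inclusion \<open>V^H \<rightarrow> V\<close>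
  (the inclusion is the identity on elements).\<close>
definition infl :: "('g \<Rightarrow> 'k) \<Rightarrow> ('k list \<Rightarrow> 'v) \<Rightarrow> 'g list \<Rightarrow> 'v" where
  "infl \<phi> f = (\<lambda>xs. f (map \<phi> xs))"

definition infl_bij :: "('g, 'b) monoid_scheme \<Rightarrow> ('k, 'c) monoid_scheme \<Rightarrow> ('g \<Rightarrow> 'k)
                         \<Rightarrow> ('g, 'v) gmod \<Rightarrow> nat \<Rightarrow> bool" where
  "infl_bij G K \<phi> V n \<longleftrightarrow>
     (\<forall>f\<in>Zb K (fixmod G K \<phi> V) n. is_cobdry G V n (infl \<phi> f) \<longrightarrow> is_cobdry K (fixmod G K \<phi> V) n f) \<and>
     (\<forall>f'\<in>Zb G V n. \<exists>f\<in>Zb K (fixmod G K \<phi> V) n. cohomologous G V n f' (infl \<phi> f))"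

definition infl_isometric_iso :: "('g, 'b) monoid_scheme \<Rightarrow> ('k, 'c) monoid_scheme \<Rightarrow> ('g \<Rightarrow> 'k)
                         \<Rightarrow> ('g, 'v) gmod \<Rightarrow> nat \<Rightarrow> bool" where
  "infl_isometric_iso G K \<phi> V n \<longleftrightarrow> infl_bij G K \<phi> V n \<and>
     (\<forall>f\<in>Zb K (fixmod G K \<phi> V) n. hb_norm G V n (infl \<phi> f) = hb_norm K (fixmod G K \<phi> V) n f)"

end

theory Submission
  imports Defs "HOL-Algebra.FiniteProduct" "HOL-Analysis.Infinite_Sum"
begin


locale vsp =
  fixes V :: "('g, 'v) gmod"
  assumes ns: "normed_space V"
begin

abbreviation "C \<equiv> vcarrier V"
abbreviation "add \<equiv> vadd V"
abbreviation "scl \<equiv> vscale V"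
abbreviation "zero \<equiv> vzero V"
abbreviation "nrm \<equiv> vnorm V"
abbreviation "sub \<equiv> vsub V"
abbreviation "neg u \<equiv> vscale V (-1) u"

lemma zero_in[simp]: "zero \<in> C" using ns unfolding normed_space_def by auto
lemma add_in[simp]: "u \<in> C \<Longrightarrow> w \<in> C \<Longrightarrow> add u w \<in> C" using ns unfolding normed_space_def by auto
lemma scl_in[simp]: "u \<in> C \<Longrightarrow> scl a u \<in> C" using ns unfolding normed_space_def by auto
lemma sub_in[simp]: "u \<in> C \<Longrightarrow> w \<in> C \<Longrightarrow> sub u w \<in> C" by (simp add: vsub_def)
lemma assoc: "u \<in> C \<Longrightarrow> w \<in> C \<Longrightarrow> x \<in> C \<Longrightarrow> add (add u w) x = add u (add w x)"
  using ns unfolding normed_space_def by auto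
lemma comm: "u \<in> C \<Longrightarrow> w \<in> C \<Longrightarrow> add u w = add w u"
  using ns unfolding normed_space_def by auto
lemma lcomm: "u \<in> C \<Longrightarrow> w \<in> C \<Longrightarrow> x \<in> C \<Longrightarrow> add u (add w x) = add w (add u x)"
  by (metis assoc comm)
lemmas ac = assoc comm lcomm
lemma add_zero[simp]: "u \<in> C \<Longrightarrow> add u zero = u" using ns unfolding normed_space_def by auto
lemma zero_add[simp]: "u \<in> C \<Longrightarrow> add zero u = u" using add_zero comm zero_in by metis
lemma add_neg[simp]: "u \<in> C \<Longrightarrow> add u (neg u) = zero" using ns unfolding normed_space_def by auto
lemma neg_add[simp]: "u \<in> C \<Longrightarrow> add (neg u) u = zero" using add_neg comm scl_in by metis
lemma scl_scl[simp]: "u \<in> C \<Longrightarrow> scl a (scl b u) = scl (a * b) u" using ns unfolding normed_space_def by auto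
lemma scl_one[simp]: "u \<in> C \<Longrightarrow> scl 1 u = u" using ns unfolding normed_space_def by auto
lemma scl_add_left: "u \<in> C \<Longrightarrow> scl (a + b) u = add (scl a u) (scl b u)" using ns unfolding normed_space_def by auto
lemma scl_add_right: "u \<in> C \<Longrightarrow> w \<in> C \<Longrightarrow> scl a (add u w) = add (scl a u) (scl a w)"
  using ns unfolding normed_space_def by auto
lemma nrm_nonneg[simp]: "u \<in> C \<Longrightarrow> 0 \<le> nrm u" using ns unfolding normed_space_def by auto
lemma nrm_zero_iff: "u \<in> C \<Longrightarrow> nrm u = 0 \<longleftrightarrow> u = zero" using ns unfolding normed_space_def by auto
lemma nrm_scl[simp]: "u \<in> C \<Longrightarrow> nrm (scl a u) = \<bar>a\<bar> * nrm u" using ns unfolding normed_space_def by auto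
lemma nrm_tri: "u \<in> C \<Longrightarrow> w \<in> C \<Longrightarrow> nrm (add u w) \<le> nrm u + nrm w" using ns unfolding normed_space_def by auto

lemma add_neg_cancel0: "u \<in> C \<Longrightarrow> w \<in> C \<Longrightarrow> add (add (neg u) u) w = w"
  by simp

lemma add_left_cancel:
  assumes "u \<in> C" "w \<in> C" "x \<in> C" "add u w = add u x" shows "w = x"
proof -
  have "w = add (add (neg u) u) w" using assms by simp
  also have "\<dots> = add (neg u) (add u w)" using assms by (simp only: assoc scl_in)
  also have "\<dots> = add (neg u) (add u x)" using assms by simp
  also have "\<dots> = add (add (neg u) u) x" using assms by (simp only: assoc scl_in)
  also have "\<dots> = x" using assms by simp
  finally show ?thesis .
qed

lemma scl_zero_left[simp]: "u \<in> C \<Longrightarrow> scl 0 u = zero"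
proof -
  assume u: "u \<in> C"
  have "add (scl 0 u) (scl 0 u) = add (scl 0 u) zero" using u scl_add_left[of u 0 0] by simp
  thus ?thesis using add_left_cancel u by (metis scl_in zero_in)
qed
lemma scl_zero_right[simp]: "scl a zero = zero"
  by (metis mult_zero_right scl_scl scl_zero_left zero_in)

lemma nrm_zero[simp]: "nrm zero = 0" using nrm_zero_iff by simp

lemma neg_neg[simp]: "u \<in> C \<Longrightarrow> neg (neg u) = u" by simp
lemma neg_add_distrib: "u \<in> C \<Longrightarrow> w \<in> C \<Longrightarrow> neg (add u w) = add (neg u) (neg w)" by (simp add: scl_add_right)

lemma sub_self[simp]: "u \<in> C \<Longrightarrow> sub u u = zero" by (simp add: vsub_def)
lemma sub_zero[simp]: "u \<in> C \<Longrightarrow> sub u zero = u" by (simp add: vsub_def)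
lemma zero_sub[simp]: "u \<in> C \<Longrightarrow> sub zero u = neg u" by (simp add: vsub_def)

lemma add_neg_cancel1[simp]: "u \<in> C \<Longrightarrow> w \<in> C \<Longrightarrow> add u (add (neg u) w) = w"
  by (simp add: assoc[symmetric])
lemma add_neg_cancel2[simp]: "u \<in> C \<Longrightarrow> w \<in> C \<Longrightarrow> add (neg u) (add u w) = w"
  by (simp add: assoc[symmetric])

lemma eq_sub_iff: "u \<in> C \<Longrightarrow> w \<in> C \<Longrightarrow> x \<in> C \<Longrightarrow> (u = sub w x) \<longleftrightarrow> add u x = w"
  unfolding vsub_def
  by (metis add_neg_cancel1 add_zero assoc neg_add comm scl_in)

lemma sub_eq_zero_iff: "u \<in> C \<Longrightarrow> w \<in> C \<Longrightarrow> sub u w = zero \<longleftrightarrow> u = w"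
  by (metis eq_sub_iff zero_add zero_in)

lemma scl_sub: "u \<in> C \<Longrightarrow> w \<in> C \<Longrightarrow> scl a (sub u w) = sub (scl a u) (scl a w)"
  by (simp add: vsub_def scl_add_right mult.commute)

lemma sub_add_sub: "a \<in> C \<Longrightarrow> b \<in> C \<Longrightarrow> c \<in> C \<Longrightarrow> d \<in> C \<Longrightarrow>
   add (sub a b) (sub c d) = sub (add a c) (add b d)"
  by (simp add: vsub_def neg_add_distrib ac)

lemma sub_sub_sub: "a \<in> C \<Longrightarrow> b \<in> C \<Longrightarrow> c \<in> C \<Longrightarrow> d \<in> C \<Longrightarrow>
   sub (sub a b) (sub c d) = sub (sub a c) (sub b d)"
  by (simp add: vsub_def neg_add_distrib ac)

lemma nrm_sub_sym: "u \<in> C \<Longrightarrow> w \<in> C \<Longrightarrow> nrm (sub u w) = nrm (sub w u)"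
proof -
  assume "u \<in> C" "w \<in> C"
  then have "sub w u = neg (sub u w)" by (simp add: vsub_def neg_add_distrib ac)
  thus ?thesis using \<open>u \<in> C\<close> \<open>w \<in> C\<close> by simp
qed

definition VM :: "'v monoid" where "VM = \<lparr>carrier = C, monoid.mult = add, monoid.one = zero\<rparr>"

lemma VM_simps[simp]: "carrier VM = C" "monoid.mult VM = add" "monoid.one VM = zero"
  by (simp_all add: VM_def)

lemma cm: "comm_monoid VM"
  by (unfold_locales) (auto simp: assoc, metis assoc comm add_in)

definition ssum :: "('a \<Rightarrow> 'v) \<Rightarrow> 'a set \<Rightarrow> 'v" where
  "ssum f A = finprod VM f A"

lemma ssum_in[simp]: "(\<And>a. a \<in> A \<Longrightarrow> f a \<in> C) \<Longrightarrow> ssum f A \<in> C"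
  unfolding ssum_def using comm_monoid.finprod_closed[OF cm, of f A] by auto

lemma ssum_empty[simp]: "ssum f {} = zero"
  unfolding ssum_def using comm_monoid.finprod_empty[OF cm] by simp

lemma ssum_infinite: "\<not> finite A \<Longrightarrow> ssum f A = zero"
  unfolding ssum_def using comm_monoid.finprod_infinite[OF cm] by simp

lemma ssum_insert[simp]: "finite A \<Longrightarrow> a \<notin> A \<Longrightarrow> (\<And>b. b \<in> insert a A \<Longrightarrow> f b \<in> C)
   \<Longrightarrow> ssum f (insert a A) = add (f a) (ssum f A)"
  unfolding ssum_def using comm_monoid.finprod_insert[OF cm, of A a f] by auto

lemma ssum_cong: "A = B \<Longrightarrow> (\<And>a. a \<in> B \<Longrightarrow> f a = g a) \<Longrightarrow> (\<And>a. a \<in> B \<Longrightarrow> g a \<in> C) \<Longrightarrow> ssum f A = ssum g B"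
  unfolding ssum_def by (rule comm_monoid.finprod_cong'[OF cm]) (auto dest: sym)

lemma ssum_add: "(\<And>a. a \<in> A \<Longrightarrow> f a \<in> C) \<Longrightarrow> (\<And>a. a \<in> A \<Longrightarrow> g a \<in> C) \<Longrightarrow>
   ssum (\<lambda>a. add (f a) (g a)) A = add (ssum f A) (ssum g A)"
  unfolding ssum_def using comm_monoid.finprod_multf[OF cm, of f A g] by auto

lemma ssum_hom:
  assumes L: "\<And>u w. u \<in> C \<Longrightarrow> w \<in> C \<Longrightarrow> L (add u w) = add (L u) (L w)" "L zero = zero"
      and LC: "\<And>u. u \<in> C \<Longrightarrow> L u \<in> C"
      and f: "\<And>a. a \<in> A \<Longrightarrow> f a \<in> C"
  shows "L (ssum f A) = ssum (\<lambda>a. L (f a)) A"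
  using f
proof (induct A rule: infinite_finite_induct)
  case (infinite A) then show ?case by (simp add: ssum_infinite L)
next
  case empty then show ?case by (simp add: L)
next
  case (insert a A)
  have f: "\<And>b. b \<in> insert a A \<Longrightarrow> f b \<in> C" using insert by auto
  have f2: "\<And>b. b \<in> insert a A \<Longrightarrow> L (f b) \<in> C" using insert LC by auto
  have "ssum f A \<in> C" using insert by auto
  then show ?case using insert ssum_insert[OF insert(1,2) f] ssum_insert[OF insert(1,2) f2] by (simp add: L LC)
qed

lemma ssum_scl: "(\<And>a. a \<in> A \<Longrightarrow> f a \<in> C) \<Longrightarrow> ssum (\<lambda>a. scl r (f a)) A = scl r (ssum f A)"
  by (rule ssum_hom[symmetric]) (auto simp: scl_add_right)

lemma ssum_sub: "(\<And>a. a \<in> A \<Longrightarrow> f a \<in> C) \<Longrightarrow> (\<And>a. a \<in> A \<Longrightarrow> g a \<in> C) \<Longrightarrow>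
   ssum (\<lambda>a. sub (f a) (g a)) A = sub (ssum f A) (ssum g A)"
  unfolding vsub_def by (simp add: ssum_add ssum_scl)

lemma ssum_const: "u \<in> C \<Longrightarrow> ssum (\<lambda>_. u) A = scl (real (card A)) u"
proof (induct A rule: infinite_finite_induct)
  case (infinite A) then show ?case by (simp add: ssum_infinite)
next
  case empty then show ?case by simp
next
  case (insert a A) then show ?case
    by (simp add: scl_add_left)
qed

lemma ssum_reindex: "inj_on h A \<Longrightarrow> (\<And>b. b \<in> h ` A \<Longrightarrow> f b \<in> C) \<Longrightarrow>
   ssum f (h ` A) = ssum (\<lambda>a. f (h a)) A"
  unfolding ssum_def using comm_monoid.finprod_reindex[OF cm, of f h A] by (auto simp: comp_def)

lemma ssum_bij: "bij_betw h A B \<Longrightarrow> (\<And>b. b \<in> B \<Longrightarrow> f b \<in> C) \<Longrightarrow>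
   ssum f B = ssum (\<lambda>a. f (h a)) A"
  unfolding bij_betw_def using ssum_reindex by blast

lemma ssum_nrm: "(\<And>a. a \<in> A \<Longrightarrow> f a \<in> C) \<Longrightarrow> nrm (ssum f A) \<le> (\<Sum>a\<in>A. nrm (f a))"
proof (induct A rule: infinite_finite_induct)
  case (infinite A) then show ?case by (simp add: ssum_infinite)
next
  case empty then show ?case by simp
next
  case (insert a A)
  have f: "\<And>b. b \<in> insert a A \<Longrightarrow> f b \<in> C" using insert by auto
  have "ssum f A \<in> C" using insert by auto
  then have "nrm (ssum f (insert a A)) \<le> nrm (f a) + nrm (ssum f A)"
    using insert ssum_insert[OF insert(1,2) f] by (simp add: nrm_tri)
  also have "\<dots> \<le> nrm (f a) + (\<Sum>a\<in>A. nrm (f a))" using insert by simp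
  finally show ?case using insert by simp
qed

definition vavg :: "'a set \<Rightarrow> ('a \<Rightarrow> 'v) \<Rightarrow> 'v" where
  "vavg A f = scl (1 / real (card A)) (ssum f A)"

lemma vavg_in[simp]: "(\<And>a. a \<in> A \<Longrightarrow> f a \<in> C) \<Longrightarrow> vavg A f \<in> C"
  by (simp add: vavg_def)

lemma vavg_const: "finite A \<Longrightarrow> A \<noteq> {} \<Longrightarrow> u \<in> C \<Longrightarrow> vavg A (\<lambda>_. u) = u"
  by (simp add: vavg_def ssum_const)

lemma vavg_cong: "A = B \<Longrightarrow> (\<And>a. a \<in> B \<Longrightarrow> f a = g a) \<Longrightarrow> (\<And>a. a \<in> B \<Longrightarrow> g a \<in> C) \<Longrightarrow> vavg A f = vavg B g"
  unfolding vavg_def by (metis ssum_cong)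

lemma vavg_const': "finite A \<Longrightarrow> A \<noteq> {} \<Longrightarrow> u \<in> C \<Longrightarrow> (\<And>a. a \<in> A \<Longrightarrow> f a = u) \<Longrightarrow> vavg A f = u"
  using vavg_cong[of A A f "\<lambda>_. u"] vavg_const by metis

lemma vavg_add: "(\<And>a. a \<in> A \<Longrightarrow> f a \<in> C) \<Longrightarrow> (\<And>a. a \<in> A \<Longrightarrow> g a \<in> C) \<Longrightarrow>
   vavg A (\<lambda>a. add (f a) (g a)) = add (vavg A f) (vavg A g)"
  by (simp add: vavg_def ssum_add scl_add_right)

lemma vavg_sub: "(\<And>a. a \<in> A \<Longrightarrow> f a \<in> C) \<Longrightarrow> (\<And>a. a \<in> A \<Longrightarrow> g a \<in> C) \<Longrightarrow>
   vavg A (\<lambda>a. sub (f a) (g a)) = sub (vavg A f) (vavg A g)"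
  by (simp add: vavg_def ssum_sub scl_sub)

lemma vavg_scl: "(\<And>a. a \<in> A \<Longrightarrow> f a \<in> C) \<Longrightarrow> vavg A (\<lambda>a. scl r (f a)) = scl r (vavg A f)"
  by (simp add: vavg_def ssum_scl mult.commute)

lemma vavg_hom:
  assumes L: "\<And>u w. u \<in> C \<Longrightarrow> w \<in> C \<Longrightarrow> L (add u w) = add (L u) (L w)" "L zero = zero"
      and Ls: "\<And>u r. u \<in> C \<Longrightarrow> L (scl r u) = scl r (L u)"
      and LC: "\<And>u. u \<in> C \<Longrightarrow> L u \<in> C"
      and f: "\<And>a. a \<in> A \<Longrightarrow> f a \<in> C"
  shows "L (vavg A f) = vavg A (\<lambda>a. L (f a))"
proof -
  have "ssum f A \<in> C" using f by auto
  then have "L (vavg A f) = scl (1 / real (card A)) (L (ssum f A))" unfolding vavg_def by (simp add: Ls)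
  also have "L (ssum f A) = ssum (\<lambda>a. L (f a)) A" by (rule ssum_hom[OF L LC f])
  finally show ?thesis unfolding vavg_def .
qed

lemma vavg_bij: "bij_betw h A B \<Longrightarrow> (\<And>b. b \<in> B \<Longrightarrow> f b \<in> C) \<Longrightarrow>
   vavg B f = vavg A (\<lambda>a. f (h a))"
  unfolding vavg_def using ssum_bij bij_betw_same_card by metis

lemma vavg_nrm: assumes "\<And>a. a \<in> A \<Longrightarrow> f a \<in> C" "\<And>a. a \<in> A \<Longrightarrow> nrm (f a) \<le> c" "0 \<le> c"
  shows "nrm (vavg A f) \<le> c"
proof (cases "finite A \<and> A \<noteq> {}")
  case True
  have "nrm (vavg A f) = (1 / real (card A)) * nrm (ssum f A)"
    using assms by (simp add: vavg_def)
  also have "\<dots> \<le> (1 / real (card A)) * (\<Sum>a\<in>A. nrm (f a))"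
    by (rule mult_left_mono) (use ssum_nrm assms in auto)
  also have "\<dots> \<le> (1 / real (card A)) * (\<Sum>a\<in>A. c)"
    by (rule mult_left_mono, rule sum_mono, rule assms) auto
  also have "(\<Sum>a\<in>A. c) = real (card A) * c" by simp
  also have "(1 / real (card A)) * (real (card A) * c) = c" using True by simp
  finally show ?thesis .

next
  case False then show ?thesis using assms by (auto simp: vavg_def ssum_infinite)
qed

lemma vsum_in[simp]: "(\<And>u. u \<in> set l \<Longrightarrow> u \<in> C) \<Longrightarrow> vsum V l \<in> C"
  by (induct l) auto

lemma vsum_map_in: "(\<And>i. i \<in> set l \<Longrightarrow> f i \<in> C) \<Longrightarrow> vsum V (map f l) \<in> C"
  by (rule vsum_in) auto

lemma vsum_map_add: "(\<And>i. i \<in> set l \<Longrightarrow> f i \<in> C) \<Longrightarrow> (\<And>i. i \<in> set l \<Longrightarrow> g i \<in> C) \<Longrightarrow>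
  vsum V (map (\<lambda>i. add (f i) (g i)) l) = add (vsum V (map f l)) (vsum V (map g l))"
proof (induct l)
  case Nil then show ?case by simp
next
  case (Cons a l)
  have "vsum V (map f l) \<in> C" "vsum V (map g l) \<in> C" using Cons by (auto intro!: vsum_map_in)
  then show ?case using Cons by (simp add: ac)
qed

lemma vsum_hom:
  assumes L: "\<And>u w. u \<in> C \<Longrightarrow> w \<in> C \<Longrightarrow> L (add u w) = add (L u) (L w)" "L zero = zero"
      and f: "\<And>i. i \<in> set l \<Longrightarrow> f i \<in> C"
  shows "L (vsum V (map f l)) = vsum V (map (\<lambda>i. L (f i)) l)"
  using f
proof (induct l)
  case Nil then show ?case by (simp add: L)
next
  case (Cons a l)
  have "vsum V (map f l) \<in> C" using Cons by (auto intro!: vsum_map_in)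
  then show ?case using Cons by (simp add: L)
qed

lemma vsum_map_sub: "(\<And>i. i \<in> set l \<Longrightarrow> f i \<in> C) \<Longrightarrow> (\<And>i. i \<in> set l \<Longrightarrow> g i \<in> C) \<Longrightarrow>
  vsum V (map (\<lambda>i. sub (f i) (g i)) l) = sub (vsum V (map f l)) (vsum V (map g l))"
  unfolding vsub_def
  by (simp add: vsum_map_add vsum_hom[of "scl (-1)", symmetric] scl_add_right)

lemma vsum_map_scl: "(\<And>i. i \<in> set l \<Longrightarrow> f i \<in> C) \<Longrightarrow>
  vsum V (map (\<lambda>i. scl r (f i)) l) = scl r (vsum V (map f l))"
  by (simp add: vsum_hom[of "scl r", symmetric] scl_add_right)

lemma ssum_vsum: "(\<And>a i. a \<in> A \<Longrightarrow> i \<in> set l \<Longrightarrow> F a i \<in> C) \<Longrightarrow>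
  ssum (\<lambda>a. vsum V (map (F a) l)) A = vsum V (map (\<lambda>i. ssum (\<lambda>a. F a i) A) l)"
proof (induct l)
  case Nil then show ?case by (simp add: ssum_const)
next
  case (Cons i l)
  have "\<And>a. a \<in> A \<Longrightarrow> vsum V (map (F a) l) \<in> C" using Cons by (auto intro!: vsum_map_in)
  then show ?case using Cons by (simp add: ssum_add)
qed

lemma vavg_vsum: "(\<And>a i. a \<in> A \<Longrightarrow> i \<in> set l \<Longrightarrow> F a i \<in> C) \<Longrightarrow>
  vavg A (\<lambda>a. vsum V (map (F a) l)) = vsum V (map (\<lambda>i. vavg A (\<lambda>a. F a i)) l)"
  unfolding vavg_def by (simp add: ssum_vsum vsum_hom[of "scl _", symmetric] scl_add_right)

end


context vsp begin

lemma upt_Suc_Cons: "[0..<Suc n] = 0 # map Suc [0..<n]"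
  by (simp add: upt_conv_Cons map_Suc_upt del: upt_Suc)

lemma cobound_in[simp]: "(\<And>zs. f zs \<in> C) \<Longrightarrow> cobound V f xs \<in> C"
  unfolding cobound_def by (rule vsum_map_in) auto

lemma cobound_Cons:
  assumes g: "\<And>zs. g zs \<in> C"
  shows "cobound V g (y # xs) = sub (g xs) (cobound V (\<lambda>zs. g (y # zs)) xs)"
proof -
  have "cobound V g (y # xs) =
     vsum V (map (\<lambda>i. scl ((-1) ^ i) (g (take i (y # xs) @ drop (Suc i) (y # xs)))) (0 # map Suc [0..<length xs]))"
    unfolding cobound_def by (simp only: length_Cons upt_Suc_Cons)
  also have "\<dots> = add (g xs) (vsum V (map (\<lambda>i. scl (-1) (scl ((-1) ^ i) (g (y # (take i xs @ drop (Suc i) xs))))) [0..<length xs]))"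
    using g by (simp add: comp_def)
  also have "\<dots> = add (g xs) (neg (cobound V (\<lambda>zs. g (y # zs)) xs))"
    unfolding cobound_def using g by (subst vsum_map_scl) auto
  finally show ?thesis by (simp add: vsub_def)
qed

lemma cobound_sub:
  assumes f: "\<And>zs. f zs \<in> C" and g: "\<And>zs. g zs \<in> C"
  shows "cobound V (\<lambda>zs. sub (f zs) (g zs)) xs = sub (cobound V f xs) (cobound V g xs)"
proof -
  let ?d = "\<lambda>i. take i xs @ drop (Suc i) xs"
  have "cobound V (\<lambda>zs. sub (f zs) (g zs)) xs =
     vsum V (map (\<lambda>i. sub (scl ((-1)^i) (f (?d i))) (scl ((-1)^i) (g (?d i)))) [0..<length xs])"
    unfolding cobound_def by (rule arg_cong[where f="vsum V"], rule map_cong[OF refl]) (simp add: scl_sub f g)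
  also have "\<dots> = sub (cobound V f xs) (cobound V g xs)"
    unfolding cobound_def by (rule vsum_map_sub) (simp_all add: f g)
  finally show ?thesis .
qed

lemma cobound_add:
  assumes f: "\<And>zs. f zs \<in> C" and g: "\<And>zs. g zs \<in> C"
  shows "cobound V (\<lambda>zs. add (f zs) (g zs)) xs = add (cobound V f xs) (cobound V g xs)"
proof -
  let ?d = "\<lambda>i. take i xs @ drop (Suc i) xs"
  have "cobound V (\<lambda>zs. add (f zs) (g zs)) xs =
     vsum V (map (\<lambda>i. add (scl ((-1)^i) (f (?d i))) (scl ((-1)^i) (g (?d i)))) [0..<length xs])"
    unfolding cobound_def by (rule arg_cong[where f="vsum V"], rule map_cong[OF refl]) (simp add: scl_add_right f g)
  also have "\<dots> = add (cobound V f xs) (cobound V g xs)"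
    unfolding cobound_def by (rule vsum_map_add) (simp_all add: f g)
  finally show ?thesis .
qed

lemma cobound_scl:
  assumes f: "\<And>zs. f zs \<in> C"
  shows "cobound V (\<lambda>zs. scl r (f zs)) xs = scl r (cobound V f xs)"
proof -
  let ?d = "\<lambda>i. take i xs @ drop (Suc i) xs"
  have "cobound V (\<lambda>zs. scl r (f zs)) xs =
     vsum V (map (\<lambda>i. scl r (scl ((-1)^i) (f (?d i)))) [0..<length xs])"
    unfolding cobound_def by (rule arg_cong[where f="vsum V"], rule map_cong[OF refl]) (simp add: f mult.commute)
  also have "\<dots> = scl r (cobound V f xs)"
    unfolding cobound_def by (rule vsum_map_scl) (simp_all add: f)
  finally show ?thesis .
qed

lemma cobound_zero[simp]: "cobound V (\<lambda>_. zero) xs = zero"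
proof -
  have "cobound V (\<lambda>_. zero) xs = cobound V (\<lambda>zs. scl 0 zero) xs" by simp
  also have "\<dots> = scl 0 (cobound V (\<lambda>_. zero) xs)" by (rule cobound_scl) simp
  also have "\<dots> = zero" by simp
  finally show ?thesis .
qed

lemma del_len: "i < length xs \<Longrightarrow> length (take i xs @ drop (Suc i) xs) = length xs - 1"
  by simp

lemma del_set: "set (take i xs @ drop (Suc i) xs) \<subseteq> set xs"
  by (auto dest: in_set_takeD in_set_dropD)

lemma cobound_cong:
  assumes "\<And>zs. Suc (length zs) = length xs \<Longrightarrow> set zs \<subseteq> set xs \<Longrightarrow> f zs = g zs"
  shows "cobound V f xs = cobound V g xs"
  unfolding cobound_def
proof (rule arg_cong[where f="vsum V"], rule map_cong[OF refl])
  fix i assume "i \<in> set [0..<length xs]"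
  then have "i < length xs" by simp
  then show "scl ((-1) ^ i) (f (take i xs @ drop (Suc i) xs)) = scl ((-1) ^ i) (g (take i xs @ drop (Suc i) xs))"
    using assms[of "take i xs @ drop (Suc i) xs"] del_set[of i xs] by simp
qed

lemma cobound_vavg:
  assumes "\<And>a zs. F a zs \<in> C"
  shows "cobound V (\<lambda>zs. vavg A (\<lambda>a. F a zs)) xs = vavg A (\<lambda>a. cobound V (F a) xs)"
  unfolding cobound_def using assms
  by (simp add: vavg_vsum vavg_scl)

lemma cobound_map: "cobound V (\<lambda>zs. f (map h zs)) xs = cobound V f (map h xs)"
  unfolding cobound_def length_map
  by (rule arg_cong[where f="vsum V"], rule map_cong[OF refl]) (simp only: take_map drop_map map_append)

end


context vsp begin

lemma add_swap4: "a \<in> C \<Longrightarrow> b \<in> C \<Longrightarrow> c \<in> C \<Longrightarrow> d \<in> C \<Longrightarrow>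
  add (add a b) (add c d) = add (add a c) (add b d)"
proof -
  assume h: "a \<in> C" "b \<in> C" "c \<in> C" "d \<in> C"
  have "add (add a b) (add c d) = add a (add b (add c d))" using h by (simp add: assoc)
  also have "\<dots> = add a (add c (add b d))" using h lcomm[of b c d] by simp
  also have "\<dots> = add (add a c) (add b d)" using h by (simp add: assoc)
  finally show ?thesis .
qed

definition lc :: "real list \<Rightarrow> 'v list \<Rightarrow> 'v" where
  "lc cs us = vsum V (map (\<lambda>(c, u). scl c u) (zip cs us))"

lemma lc_Nil[simp]: "lc [] us = zero" by (simp add: lc_def)
lemma lc_Cons[simp]: "lc (c # cs) (u # us) = add (scl c u) (lc cs us)" by (simp add: lc_def)

lemma lc_in: "set us \<subseteq> C \<Longrightarrow> lc cs us \<in> C"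
  unfolding lc_def by (rule vsum_in) (auto dest: set_zip_rightD)

lemma lc_add: "length cs = length us \<Longrightarrow> length ds = length us \<Longrightarrow> set us \<subseteq> C \<Longrightarrow>
   add (lc cs us) (lc ds us) = lc (map2 (+) cs ds) us"
proof (induct us arbitrary: cs ds)
  case Nil then show ?case by simp
next
  case (Cons u us)
  then obtain c cs' d ds' where cd: "cs = c # cs'" "ds = d # ds'" by (metis length_Suc_conv)
  have i: "lc cs' us \<in> C" "lc ds' us \<in> C" "u \<in> C" using Cons by (auto intro: lc_in)
  have IH: "add (lc cs' us) (lc ds' us) = lc (map2 (+) cs' ds') us"
    using Cons cd by simp
  have "add (lc cs (u # us)) (lc ds (u # us)) = add (add (scl c u) (lc cs' us)) (add (scl d u) (lc ds' us))"
    using cd by simp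
  also have "\<dots> = add (add (scl c u) (scl d u)) (add (lc cs' us) (lc ds' us))"
    by (rule add_swap4) (use i in auto)
  also have "\<dots> = lc (map2 (+) cs ds) (u # us)" using cd IH i by (simp add: scl_add_left)
  finally show ?case .
qed

lemma lc_scl: "set us \<subseteq> C \<Longrightarrow> scl r (lc cs us) = lc (map ((*) r) cs) us"
proof (induct us arbitrary: cs)
  case Nil then show ?case by (simp add: lc_def)
next
  case (Cons u us)
  show ?case
  proof (cases cs)
    case Nil then show ?thesis by simp
  next
    case (Cons c cs')
    have "lc cs' us \<in> C" using Cons.prems by (auto intro: lc_in)
    then show ?thesis using Cons Cons.prems Cons.hyps by (simp add: scl_add_right)
  qed
qed

lemma lc_sub: "length cs = length us \<Longrightarrow> length ds = length us \<Longrightarrow> set us \<subseteq> C \<Longrightarrow>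
   sub (lc cs us) (lc ds us) = lc (map2 (\<lambda>a b. a - b) cs ds) us"
proof -
  assume a: "length cs = length us" "length ds = length us" "set us \<subseteq> C"
  have "sub (lc cs us) (lc ds us) = add (lc cs us) (lc (map ((*) (-1)) ds) us)"
    unfolding vsub_def using a by (simp add: lc_scl)
  also have "\<dots> = lc (map2 (+) cs (map ((*) (-1)) ds)) us" using a by (simp add: lc_add)
  also have "map2 (+) cs (map ((*) (-1)) ds) = map2 (\<lambda>a b. a - b) cs ds"
    by (simp add: zip_map2 case_prod_beta)
  finally show ?thesis .
qed

lemma ident6:
  assumes in_C: "P \<in> C" "Q \<in> C" "R \<in> C" "a1 \<in> C" "a2 \<in> C" "e \<in> C" "q \<in> C"
    and IH: "add Q R = sub a1 q"
  shows "add (sub P (sub (sub a1 (sub a2 e)) Q)) (sub e (sub P R)) = sub a2 q"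
proof -
  have Q: "Q = sub (sub a1 q) R" using IH in_C by (simp add: eq_sub_iff)
  define L where "L cs = lc cs [P, R, a1, a2, e, q]" for cs
  have us: "set [P, R, a1, a2, e, q] \<subseteq> C" using in_C by auto
  have atoms: "P = L [1,0,0,0,0,0]" "R = L [0,1,0,0,0,0]" "a1 = L [0,0,1,0,0,0]"
     "a2 = L [0,0,0,1,0,0]" "e = L [0,0,0,0,1,0]" "q = L [0,0,0,0,0,1]"
    using in_C by (simp_all add: L_def)
  have Ls: "length cs = 6 \<Longrightarrow> length ds = 6 \<Longrightarrow> sub (L cs) (L ds) = L (map2 (\<lambda>a b. a - b) cs ds)"
       "length cs = 6 \<Longrightarrow> length ds = 6 \<Longrightarrow> add (L cs) (L ds) = L (map2 (+) cs ds)" for cs ds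
    unfolding L_def using us by (simp_all add: lc_sub lc_add)
  show ?thesis unfolding Q by (subst atoms)+ (simp add: Ls)
qed

end

locale setting = vsp V for V :: "('g, 'v) gmod" +
  fixes \<Gamma> :: "'g monoid" and K :: "'k monoid" and \<phi> :: "'g \<Rightarrow> 'k"
  assumes grpG: "group \<Gamma>" and grpK: "group K" and hom: "\<phi> \<in> hom \<Gamma> K"
    and surj: "\<phi> ` carrier \<Gamma> = carrier K"
    and gm: "normed_gmod \<Gamma> V" and fin: "finite (kernel \<Gamma> K \<phi>)"
begin

abbreviation "act' \<equiv> act V"
abbreviation "H \<equiv> kernel \<Gamma> K \<phi>"

sublocale G: group \<Gamma> by (rule grpG)
sublocale KK: group K by (rule grpK)

lemma gh: "group_hom \<Gamma> K \<phi>"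
  using grpG grpK hom unfolding group_hom_def group_hom_axioms_def by auto

lemma phi_mult: "x \<in> carrier \<Gamma> \<Longrightarrow> y \<in> carrier \<Gamma> \<Longrightarrow> \<phi> (x \<otimes>\<^bsub>\<Gamma>\<^esub> y) = \<phi> x \<otimes>\<^bsub>K\<^esub> \<phi> y"
  by (rule group_hom.hom_mult[OF gh])
lemma phi_in: "x \<in> carrier \<Gamma> \<Longrightarrow> \<phi> x \<in> carrier K"
  by (rule group_hom.hom_closed[OF gh])
lemma phi_inv: "x \<in> carrier \<Gamma> \<Longrightarrow> \<phi> (inv\<^bsub>\<Gamma>\<^esub> x) = inv\<^bsub>K\<^esub> \<phi> x"
  by (rule group_hom.hom_inv[OF gh])
lemma phi_one: "\<phi> \<one>\<^bsub>\<Gamma>\<^esub> = \<one>\<^bsub>K\<^esub>"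
  by (rule group_hom.hom_one[OF gh])

lemma act_in[simp]: "g \<in> carrier \<Gamma> \<Longrightarrow> u \<in> C \<Longrightarrow> act' g u \<in> C"
  using gm unfolding normed_gmod_def by (meson)
lemma act_nrm[simp]: "g \<in> carrier \<Gamma> \<Longrightarrow> u \<in> C \<Longrightarrow> nrm (act' g u) = nrm u"
  using gm unfolding normed_gmod_def by (meson)
lemma act_add: "g \<in> carrier \<Gamma> \<Longrightarrow> u \<in> C \<Longrightarrow> w \<in> C \<Longrightarrow> act' g (add u w) = add (act' g u) (act' g w)"
  using gm unfolding normed_gmod_def by (meson)
lemma act_scl: "g \<in> carrier \<Gamma> \<Longrightarrow> u \<in> C \<Longrightarrow> act' g (scl a u) = scl a (act' g u)"
  using gm unfolding normed_gmod_def by (meson)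
lemma act_one[simp]: "u \<in> C \<Longrightarrow> act' \<one>\<^bsub>\<Gamma>\<^esub> u = u"
  using gm unfolding normed_gmod_def by (meson)
lemma act_mult: "g \<in> carrier \<Gamma> \<Longrightarrow> h \<in> carrier \<Gamma> \<Longrightarrow> u \<in> C \<Longrightarrow> act' (g \<otimes>\<^bsub>\<Gamma>\<^esub> h) u = act' g (act' h u)"
  using gm unfolding normed_gmod_def by (meson)
lemma act_zero[simp]: "g \<in> carrier \<Gamma> \<Longrightarrow> act' g zero = zero"
proof -
  assume g: "g \<in> carrier \<Gamma>"
  have "act' g zero = act' g (scl 0 zero)" by simp
  also have "\<dots> = scl 0 (act' g zero)" using g by (rule act_scl) simp
  also have "\<dots> = zero" using g by simp
  finally show ?thesis .
qed
lemma act_sub: "g \<in> carrier \<Gamma> \<Longrightarrow> u \<in> C \<Longrightarrow> w \<in> C \<Longrightarrow> act' g (sub u w) = sub (act' g u) (act' g w)"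
  by (simp add: vsub_def act_add act_scl)

definition fib :: "'k \<Rightarrow> 'g set" where "fib k = {g \<in> carrier \<Gamma>. \<phi> g = k}"

lemma fib_transl: assumes g: "g \<in> carrier \<Gamma>" and k: "k \<in> carrier K"
  shows "bij_betw (\<lambda>y. g \<otimes>\<^bsub>\<Gamma>\<^esub> y) (fib k) (fib (\<phi> g \<otimes>\<^bsub>K\<^esub> k))"
proof (rule bij_betwI[where g="\<lambda>z. inv\<^bsub>\<Gamma>\<^esub> g \<otimes>\<^bsub>\<Gamma>\<^esub> z"])
  have gi: "inv\<^bsub>\<Gamma>\<^esub> g \<in> carrier \<Gamma>" using g by (rule G.inv_closed)
  show "(\<lambda>y. g \<otimes>\<^bsub>\<Gamma>\<^esub> y) \<in> fib k \<rightarrow> fib (\<phi> g \<otimes>\<^bsub>K\<^esub> k)"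
  proof
    fix y assume "y \<in> fib k"
    then have y: "y \<in> carrier \<Gamma>" "\<phi> y = k" by (auto simp: fib_def)
    then show "g \<otimes>\<^bsub>\<Gamma>\<^esub> y \<in> fib (\<phi> g \<otimes>\<^bsub>K\<^esub> k)"
      using g by (simp add: fib_def phi_mult)
  qed
  show "(\<lambda>z. inv\<^bsub>\<Gamma>\<^esub> g \<otimes>\<^bsub>\<Gamma>\<^esub> z) \<in> fib (\<phi> g \<otimes>\<^bsub>K\<^esub> k) \<rightarrow> fib k"
  proof
    fix z assume "z \<in> fib (\<phi> g \<otimes>\<^bsub>K\<^esub> k)"
    then have z: "z \<in> carrier \<Gamma>" "\<phi> z = \<phi> g \<otimes>\<^bsub>K\<^esub> k" by (auto simp: fib_def)
    have "\<phi> (inv\<^bsub>\<Gamma>\<^esub> g \<otimes>\<^bsub>\<Gamma>\<^esub> z) = inv\<^bsub>K\<^esub> \<phi> g \<otimes>\<^bsub>K\<^esub> (\<phi> g \<otimes>\<^bsub>K\<^esub> k)"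
      using z g gi by (simp add: phi_mult phi_inv)
    also have "\<dots> = k" using g k phi_in KK.inv_solve_left'[of k "\<phi> g" "\<phi> g \<otimes>\<^bsub>K\<^esub> k"] by simp
    finally show "inv\<^bsub>\<Gamma>\<^esub> g \<otimes>\<^bsub>\<Gamma>\<^esub> z \<in> fib k" using z gi by (simp add: fib_def)
  qed
  show "inv\<^bsub>\<Gamma>\<^esub> g \<otimes>\<^bsub>\<Gamma>\<^esub> (g \<otimes>\<^bsub>\<Gamma>\<^esub> y) = y" if "y \<in> fib k" for y
    using that g gi G.inv_solve_left'[of y g "g \<otimes>\<^bsub>\<Gamma>\<^esub> y"] by (simp add: fib_def)
  show "g \<otimes>\<^bsub>\<Gamma>\<^esub> (inv\<^bsub>\<Gamma>\<^esub> g \<otimes>\<^bsub>\<Gamma>\<^esub> z) = z" if "z \<in> fib (\<phi> g \<otimes>\<^bsub>K\<^esub> k)" for z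
    using that g gi G.inv_solve_left[of "inv\<^bsub>\<Gamma>\<^esub> g \<otimes>\<^bsub>\<Gamma>\<^esub> z" g z] by (simp add: fib_def)
qed

lemma fib_one: "fib \<one>\<^bsub>K\<^esub> = H"
  by (simp add: fib_def kernel_def)

lemma fib_props: assumes k: "k \<in> carrier K" shows "finite (fib k)" "fib k \<noteq> {}"
proof -
  have "k \<in> \<phi> ` carrier \<Gamma>" using k surj by simp
  then obtain g where g: "g \<in> carrier \<Gamma>" "\<phi> g = k" by (metis imageE)
  have b0: "bij_betw (\<lambda>y. g \<otimes>\<^bsub>\<Gamma>\<^esub> y) (fib \<one>\<^bsub>K\<^esub>) (fib (\<phi> g \<otimes>\<^bsub>K\<^esub> \<one>\<^bsub>K\<^esub>))"
    by (rule fib_transl[OF g(1) KK.one_closed])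
  have e: "\<phi> g \<otimes>\<^bsub>K\<^esub> \<one>\<^bsub>K\<^esub> = k" using KK.r_one[OF phi_in[OF g(1)]] g(2) by simp
  have b: "bij_betw (\<lambda>y. g \<otimes>\<^bsub>\<Gamma>\<^esub> y) H (fib k)" using b0 unfolding e fib_one .
  show "finite (fib k)" using bij_betw_finite[OF b] fin by simp
  show "fib k \<noteq> {}" using g unfolding fib_def by blast
qed

lemma fib_card: assumes k: "k \<in> carrier K" shows "card (fib k) = card H"
proof -
  have "k \<in> \<phi> ` carrier \<Gamma>" using k surj by simp
  then obtain g where g: "g \<in> carrier \<Gamma>" "\<phi> g = k" by (metis imageE)
  have b0: "bij_betw (\<lambda>y. g \<otimes>\<^bsub>\<Gamma>\<^esub> y) (fib \<one>\<^bsub>K\<^esub>) (fib (\<phi> g \<otimes>\<^bsub>K\<^esub> \<one>\<^bsub>K\<^esub>))"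
    by (rule fib_transl[OF g(1) KK.one_closed])
  have e: "\<phi> g \<otimes>\<^bsub>K\<^esub> \<one>\<^bsub>K\<^esub> = k" using KK.r_one[OF phi_in[OF g(1)]] g(2) by simp
  have b: "bij_betw (\<lambda>y. g \<otimes>\<^bsub>\<Gamma>\<^esub> y) H (fib k)" using b0 unfolding e fib_one .
  show ?thesis using bij_betw_same_card[OF b] by simp
qed

end


definition retype :: "('g, 'v) gmod \<Rightarrow> ('k, 'v) gmod" where
  "retype V = \<lparr>vcarrier = vcarrier V, vzero = vzero V, vadd = vadd V, vscale = vscale V,
     vnorm = vnorm V, act = (\<lambda>_ u. u)\<rparr>"

lemma retype_simps[simp]: "vcarrier (retype V) = vcarrier V" "vzero (retype V) = vzero V"
  "vadd (retype V) = vadd V" "vscale (retype V) = vscale V" "vnorm (retype V) = vnorm V"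
  by (simp_all add: retype_def)

lemma vsub_retype[simp]: "vsub (retype V) = vsub V"
  unfolding vsub_def[abs_def] retype_simps ..

lemma vsum_fields: assumes "vadd V1 = vadd V2" "vzero V1 = vzero V2" shows "vsum V1 l = vsum V2 l"
  by (induct l) (simp_all only: vsum.simps assms)

lemma cobound_fields: "vadd V1 = vadd V2 \<Longrightarrow> vzero V1 = vzero V2 \<Longrightarrow> vscale V1 = vscale V2 \<Longrightarrow>
  cobound V1 f xs = cobound V2 f xs"
  unfolding cobound_def by (simp only: vsum_fields[of V1 V2])

lemma normed_space_retype: "normed_space (retype V) = normed_space V"
  unfolding normed_space_def by simp

context setting begin

sublocale VK: vsp "retype V :: ('k, 'v) gmod"
  by unfold_locales (simp add: normed_space_retype ns)

abbreviation "VK \<equiv> (retype V :: ('k, 'v) gmod)"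

lemma VK_VM[simp]: "VK.VM = VM" by (simp add: VK.VM_def VM_def)
lemma VK_ssum[simp]: "VK.ssum = ssum" by (simp add: VK.ssum_def[abs_def] ssum_def[abs_def])
lemma VK_vavg[simp]: "VK.vavg = vavg" by (simp add: VK.vavg_def[abs_def] vavg_def[abs_def])

lemma cobound_K_in[simp]: "(\<And>zs. f zs \<in> C) \<Longrightarrow> cobound VK f xs \<in> C"
  using VK.cobound_in[of f xs] by simp

fun avgL :: "('g list \<Rightarrow> 'v) \<Rightarrow> 'k list \<Rightarrow> 'v" where
  "avgL F [] = F []"
| "avgL F (k # ks) = vavg (fib k) (\<lambda>y. avgL (\<lambda>ys. F (y # ys)) ks)"

lemma avgL_in[simp]: "(\<And>zs. F zs \<in> C) \<Longrightarrow> avgL F ks \<in> C"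
proof (induct ks arbitrary: F)
  case Nil then show ?case by simp
next
  case (Cons k ks) then show ?case by (simp add: vavg_in)
qed

lemma avgL_cong:
  assumes "\<And>ys. set ys \<subseteq> carrier \<Gamma> \<Longrightarrow> map \<phi> ys = ks \<Longrightarrow> F ys = G ys" "\<And>zs. G zs \<in> C"
  shows "avgL F ks = avgL G ks"
  using assms
proof (induct ks arbitrary: F G)
  case Nil then show ?case by simp
next
  case (Cons k ks)
  show ?case unfolding avgL.simps
  proof (rule vavg_cong[OF refl])
    fix y assume y: "y \<in> fib k"
    show "avgL (\<lambda>ys. F (y # ys)) ks = avgL (\<lambda>ys. G (y # ys)) ks"
      by (rule Cons.hyps) (use Cons.prems y in \<open>auto simp: fib_def\<close>)
    show "avgL (\<lambda>ys. G (y # ys)) ks \<in> C" using Cons.prems by simp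
  qed
qed

lemma avgL_const:
  assumes "set ks \<subseteq> carrier K" "u \<in> C" "\<And>ys. set ys \<subseteq> carrier \<Gamma> \<Longrightarrow> map \<phi> ys = ks \<Longrightarrow> F ys = u"
  shows "avgL F ks = u"
  using assms
proof (induct ks arbitrary: F)
  case Nil then show ?case by simp
next
  case (Cons k ks)
  have k: "k \<in> carrier K" using Cons by simp
  show ?case unfolding avgL.simps
  proof (rule vavg_const'[OF fib_props[OF k] \<open>u \<in> C\<close>])
    fix y assume y: "y \<in> fib k"
    show "avgL (\<lambda>ys. F (y # ys)) ks = u"
      by (rule Cons.hyps) (use Cons.prems y in \<open>auto simp: fib_def\<close>)
  qed
qed

lemma avgL_sub:
  assumes "\<And>zs. F zs \<in> C" "\<And>zs. G zs \<in> C"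
  shows "avgL (\<lambda>ys. sub (F ys) (G ys)) ks = sub (avgL F ks) (avgL G ks)"
  using assms
proof (induct ks arbitrary: F G)
  case Nil then show ?case by simp
next
  case (Cons k ks)
  have "avgL (\<lambda>ys. sub (F ys) (G ys)) (k # ks) =
     vavg (fib k) (\<lambda>y. sub (avgL (\<lambda>ys. F (y # ys)) ks) (avgL (\<lambda>ys. G (y # ys)) ks))"
    unfolding avgL.simps by (rule vavg_cong[OF refl]) (use Cons in auto)
  also have "\<dots> = sub (avgL F (k # ks)) (avgL G (k # ks))"
    unfolding avgL.simps by (rule vavg_sub) (use Cons in auto)
  finally show ?case .
qed

lemma avgL_add:
  assumes "\<And>zs. F zs \<in> C" "\<And>zs. G zs \<in> C"
  shows "avgL (\<lambda>ys. add (F ys) (G ys)) ks = add (avgL F ks) (avgL G ks)"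
  using assms
proof (induct ks arbitrary: F G)
  case Nil then show ?case by simp
next
  case (Cons k ks)
  have "avgL (\<lambda>ys. add (F ys) (G ys)) (k # ks) =
     vavg (fib k) (\<lambda>y. add (avgL (\<lambda>ys. F (y # ys)) ks) (avgL (\<lambda>ys. G (y # ys)) ks))"
    unfolding avgL.simps by (rule vavg_cong[OF refl]) (use Cons in auto)
  also have "\<dots> = add (avgL F (k # ks)) (avgL G (k # ks))"
    unfolding avgL.simps by (rule vavg_add) (use Cons in auto)
  finally show ?case .
qed

lemma avgL_scl:
  assumes "\<And>zs. F zs \<in> C"
  shows "avgL (\<lambda>ys. scl r (F ys)) ks = scl r (avgL F ks)"
  using assms
proof (induct ks arbitrary: F)
  case Nil then show ?case by simp
next
  case (Cons k ks)
  have "avgL (\<lambda>ys. scl r (F ys)) (k # ks) =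
     vavg (fib k) (\<lambda>y. scl r (avgL (\<lambda>ys. F (y # ys)) ks))"
    unfolding avgL.simps by (rule vavg_cong[OF refl]) (use Cons in auto)
  also have "\<dots> = scl r (avgL F (k # ks))"
    unfolding avgL.simps by (rule vavg_scl) (use Cons in auto)
  finally show ?case .
qed

lemma avgL_cobound:
  assumes "set ks \<subseteq> carrier K" "\<And>zs. F zs \<in> C"
  shows "avgL (cobound V F) ks = cobound VK (avgL F) ks"
  using assms
proof (induct ks arbitrary: F)
  case Nil then show ?case by (simp add: cobound_def)
next
  case (Cons k ks)
  have k: "k \<in> carrier K" and ks: "set ks \<subseteq> carrier K" using Cons.prems by auto
  have F: "\<And>zs. F zs \<in> C" by (rule Cons.prems)
  have "avgL (cobound V F) (k # ks) = vavg (fib k) (\<lambda>y. avgL (\<lambda>ys. cobound V F (y # ys)) ks)"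
    by simp
  also have "\<dots> = vavg (fib k) (\<lambda>y. sub (avgL F ks) (cobound VK (avgL (\<lambda>zs. F (y # zs))) ks))"
  proof (rule vavg_cong[OF refl])
    fix y assume y: "y \<in> fib k"
    have "avgL (\<lambda>ys. cobound V F (y # ys)) ks = avgL (\<lambda>ys. sub (F ys) (cobound V (\<lambda>zs. F (y # zs)) ys)) ks"
      by (simp add: cobound_Cons F)
    also have "\<dots> = sub (avgL F ks) (avgL (cobound V (\<lambda>zs. F (y # zs))) ks)"
      by (rule avgL_sub) (simp_all add: F)
    also have "avgL (cobound V (\<lambda>zs. F (y # zs))) ks = cobound VK (avgL (\<lambda>zs. F (y # zs))) ks"
      by (rule Cons.hyps[OF ks]) (simp add: F)
    finally show "avgL (\<lambda>ys. cobound V F (y # ys)) ks = sub (avgL F ks) (cobound VK (avgL (\<lambda>zs. F (y # zs))) ks)" .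
    show "sub (avgL F ks) (cobound VK (avgL (\<lambda>zs. F (y # zs))) ks) \<in> C" by (simp add: F)
  qed
  also have "\<dots> = sub (vavg (fib k) (\<lambda>y. avgL F ks)) (vavg (fib k) (\<lambda>y. cobound VK (avgL (\<lambda>zs. F (y # zs))) ks))"
    by (rule vavg_sub) (simp_all add: F)
  also have "vavg (fib k) (\<lambda>y. avgL F ks) = avgL F ks"
    by (rule vavg_const[OF fib_props[OF k]]) (simp add: F)
  also have "vavg (fib k) (\<lambda>y. cobound VK (avgL (\<lambda>zs. F (y # zs))) ks) =
      cobound VK (\<lambda>zs. vavg (fib k) (\<lambda>y. avgL (\<lambda>ys. F (y # ys)) zs)) ks"
    using VK.cobound_vavg[of "\<lambda>y zs. avgL (\<lambda>ys. F (y # ys)) zs" "fib k" ks] by (simp add: F)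
  also have "sub (avgL F ks) (cobound VK (\<lambda>zs. vavg (fib k) (\<lambda>y. avgL (\<lambda>ys. F (y # ys)) zs)) ks)
     = cobound VK (avgL F) (k # ks)"
    by (subst VK.cobound_Cons) (simp_all add: F)
  finally show ?case .
qed

lemma avgL_equiv:
  assumes g: "g \<in> carrier \<Gamma>" and "set ks \<subseteq> carrier K" "\<And>zs. F zs \<in> C" "\<And>zs. F' zs \<in> C"
    and rel: "\<And>zs. set zs \<subseteq> carrier \<Gamma> \<Longrightarrow> F (map (\<lambda>z. g \<otimes>\<^bsub>\<Gamma>\<^esub> z) zs) = act' g (F' zs)"
  shows "avgL F (map (\<lambda>k. \<phi> g \<otimes>\<^bsub>K\<^esub> k) ks) = act' g (avgL F' ks)"
  using assms(2-)
proof (induct ks arbitrary: F F')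
  case Nil then show ?case using Nil.prems(4)[of "[]"] by simp
next
  case (Cons k ks)
  have k: "k \<in> carrier K" and ks: "set ks \<subseteq> carrier K" using Cons.prems by auto
  have "avgL F (map (\<lambda>k. \<phi> g \<otimes>\<^bsub>K\<^esub> k) (k # ks)) =
     vavg (fib (\<phi> g \<otimes>\<^bsub>K\<^esub> k)) (\<lambda>y. avgL (\<lambda>ys. F (y # ys)) (map (\<lambda>k. \<phi> g \<otimes>\<^bsub>K\<^esub> k) ks))"
    by simp
  also have "\<dots> = vavg (fib k) (\<lambda>y. avgL (\<lambda>ys. F ((g \<otimes>\<^bsub>\<Gamma>\<^esub> y) # ys)) (map (\<lambda>k. \<phi> g \<otimes>\<^bsub>K\<^esub> k) ks))"
    by (rule vavg_bij[OF fib_transl[OF g k]]) (simp add: Cons.prems)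
  also have "\<dots> = vavg (fib k) (\<lambda>y. act' g (avgL (\<lambda>ys. F' (y # ys)) ks))"
  proof (rule vavg_cong[OF refl])
    fix y assume y: "y \<in> fib k"
    then have yc: "y \<in> carrier \<Gamma>" by (simp add: fib_def)
    show "avgL (\<lambda>ys. F ((g \<otimes>\<^bsub>\<Gamma>\<^esub> y) # ys)) (map (\<lambda>k. \<phi> g \<otimes>\<^bsub>K\<^esub> k) ks) = act' g (avgL (\<lambda>ys. F' (y # ys)) ks)"
    proof (rule Cons.hyps[OF ks])
      fix zs :: "'g list" assume zs: "set zs \<subseteq> carrier \<Gamma>"
      have "F ((g \<otimes>\<^bsub>\<Gamma>\<^esub> y) # map (\<lambda>z. g \<otimes>\<^bsub>\<Gamma>\<^esub> z) zs) = F (map (\<lambda>z. g \<otimes>\<^bsub>\<Gamma>\<^esub> z) (y # zs))" by simp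
      also have "\<dots> = act' g (F' (y # zs))" using zs yc by (intro Cons.prems) auto
      finally show "F ((g \<otimes>\<^bsub>\<Gamma>\<^esub> y) # map (\<lambda>z. g \<otimes>\<^bsub>\<Gamma>\<^esub> z) zs) = act' g (F' (y # zs))" .
    qed (simp_all add: Cons.prems)
    show "act' g (avgL (\<lambda>ys. F' (y # ys)) ks) \<in> C" using g by (simp add: Cons.prems)
  qed
  also have "\<dots> = act' g (avgL F' (k # ks))"
    unfolding avgL.simps
    by (rule vavg_hom[symmetric]) (simp_all add: g act_add act_scl Cons.prems)
  finally show ?case .
qed

lemma avgL_nrm:
  assumes "\<And>zs. F zs \<in> C" "\<And>zs. nrm (F zs) \<le> c" "0 \<le> c"
  shows "nrm (avgL F ks) \<le> c"
  using assms
proof (induct ks arbitrary: F)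
  case Nil then show ?case by simp
next
  case (Cons k ks)
  show ?case unfolding avgL.simps
    by (rule vavg_nrm) (use Cons in auto)
qed

end


context vsp begin
lemma nrm_sub_le: "u \<in> C \<Longrightarrow> w \<in> C \<Longrightarrow> nrm (sub u w) \<le> nrm u + nrm w"
  unfolding vsub_def using nrm_tri[of u "neg w"] by simp

lemma sub_swap: "u \<in> C \<Longrightarrow> a \<in> C \<Longrightarrow> b \<in> C \<Longrightarrow> u = sub a b \<Longrightarrow> b = sub a u"
  by (metis eq_sub_iff comm)
end

context setting begin

lemma vsum_VK: "vsum VK = vsum V" by (rule ext, rule vsum_fields) simp_all

lemma cobound_map_K: "cobound V (\<lambda>zs. f (map \<phi> zs)) xs = cobound VK f (map \<phi> xs)"
  unfolding cobound_def length_map retype_simps vsum_VK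
  by (rule arg_cong[where f="vsum V"], rule map_cong[OF refl]) (simp only: take_map drop_map map_append)

fun hp :: "('g list \<Rightarrow> 'v) \<Rightarrow> 'g list \<Rightarrow> 'v" where
  "hp f [] = zero"
| "hp f (x # xs) = sub (avgL (\<lambda>ys. f (x # ys)) (map \<phi> (x # xs))) (hp (\<lambda>zs. f (x # zs)) xs)"

lemma hp_in[simp]: "(\<And>zs. f zs \<in> C) \<Longrightarrow> hp f xs \<in> C"
  by (induct xs arbitrary: f) simp_all

lemma hp_sub:
  assumes "\<And>zs. f zs \<in> C" "\<And>zs. g zs \<in> C"
  shows "hp (\<lambda>zs. sub (f zs) (g zs)) xs = sub (hp f xs) (hp g xs)"
  using assms
proof (induct xs arbitrary: f g)
  case Nil then show ?case by simp
next
  case (Cons x xs)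
  have "hp (\<lambda>zs. sub (f zs) (g zs)) (x # xs) =
    sub (sub (avgL (\<lambda>ys. f (x # ys)) (map \<phi> (x # xs))) (avgL (\<lambda>ys. g (x # ys)) (map \<phi> (x # xs))))
        (sub (hp (\<lambda>zs. f (x # zs)) xs) (hp (\<lambda>zs. g (x # zs)) xs))"
    using Cons by (simp add: avgL_sub del: avgL.simps)
  also have "\<dots> = sub (hp f (x # xs)) (hp g (x # xs))"
    using Cons by (simp add: sub_sub_sub)
  finally show ?case .
qed

lemma hp_main:
  assumes "set xs \<subseteq> carrier \<Gamma>" "\<And>zs. f zs \<in> C"
  shows "add (cobound V (hp f) xs) (hp (cobound V f) xs) = sub (avgL f (map \<phi> xs)) (f xs)"
  using assms
proof (induct xs arbitrary: f)
  case Nil then show ?case by (simp add: cobound_def)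
next
  case (Cons x xs)
  have x: "x \<in> carrier \<Gamma>" and xs: "set xs \<subseteq> carrier \<Gamma>" using Cons.prems by auto
  have f: "\<And>zs. f zs \<in> C" by (rule Cons.prems)
  have mxs: "set (map \<phi> xs) \<subseteq> carrier K" using xs phi_in by auto
  define f1 where "f1 = (\<lambda>zs. f (x # zs))"
  have f1: "\<And>zs. f1 zs \<in> C" by (simp add: f1_def f)
  define P where "P = hp f xs"
  define Q where "Q = cobound V (hp f1) xs"
  define R where "R = hp (cobound V f1) xs"
  define a1 where "a1 = avgL f1 (map \<phi> xs)"
  define a2 where "a2 = avgL f (map \<phi> (x # xs))"
  define e where "e = avgL (\<lambda>ys. cobound V f (x # ys)) (map \<phi> (x # xs))"
  define q where "q = f (x # xs)"
  have inC: "P \<in> C" "Q \<in> C" "R \<in> C" "a1 \<in> C" "a2 \<in> C" "e \<in> C" "q \<in> C"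
    by (simp_all add: P_def Q_def R_def a1_def a2_def e_def q_def f f1)
  have IH: "add Q R = sub a1 q"
    unfolding Q_def R_def a1_def q_def using Cons.hyps[of f1, OF xs f1] by (simp add: f1_def)
  define F2 where "F2 zs = avgL f1 (map \<phi> (x # zs))" for zs
  have F2: "\<And>zs. F2 zs \<in> C" by (simp add: F2_def f1)
  have s1: "cobound V (hp f) (x # xs) = sub P (cobound V (\<lambda>zs. hp f (x # zs)) xs)"
    unfolding P_def by (rule cobound_Cons) (simp add: f)
  have "(\<lambda>zs. hp f (x # zs)) = (\<lambda>zs. sub (F2 zs) (hp f1 zs))"
    by (simp add: F2_def f1_def)
  then have s2: "cobound V (\<lambda>zs. hp f (x # zs)) xs = sub (cobound V F2 xs) Q"
    unfolding Q_def by (simp add: cobound_sub F2 f1)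
  have key: "cobound V (\<lambda>ys. f (x # y # ys)) ws = sub (f1 ws) (sub (f (y # ws)) (cobound V f (x # y # ws)))"
    for y ws
  proof -
    have c1: "cobound V f1 (y # ws) = sub (f1 ws) (cobound V (\<lambda>zs. f1 (y # zs)) ws)"
      by (rule cobound_Cons) (simp add: f1)
    have c2: "cobound V f (x # y # ws) = sub (f (y # ws)) (cobound V f1 (y # ws))"
      unfolding f1_def by (rule cobound_Cons) (simp add: f)
    have "cobound V (\<lambda>zs. f1 (y # zs)) ws = sub (f1 ws) (cobound V f1 (y # ws))"
      by (rule sub_swap[OF _ _ _ c1]) (simp_all add: f1)
    moreover have "cobound V f1 (y # ws) = sub (f (y # ws)) (cobound V f (x # y # ws))"
      by (rule sub_swap[OF _ _ _ c2]) (simp_all add: f f1)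
    ultimately show ?thesis by (simp add: f1_def)
  qed
  have s3: "cobound V F2 xs = sub a1 (sub a2 e)"
  proof -
    have "F2 = (\<lambda>zs. vavg (fib (\<phi> x)) (\<lambda>y. avgL (\<lambda>ys. f (x # y # ys)) (map \<phi> zs)))"
      by (simp add: F2_def f1_def fun_eq_iff)
    then have "cobound V F2 xs = vavg (fib (\<phi> x)) (\<lambda>y. cobound V (\<lambda>zs. avgL (\<lambda>ys. f (x # y # ys)) (map \<phi> zs)) xs)"
      by (simp add: cobound_vavg f)
    also have "\<dots> = vavg (fib (\<phi> x)) (\<lambda>y. avgL (cobound V (\<lambda>ys. f (x # y # ys))) (map \<phi> xs))"
    proof (rule vavg_cong[OF refl])
      fix y
      show "cobound V (\<lambda>zs. avgL (\<lambda>ys. f (x # y # ys)) (map \<phi> zs)) xs = avgL (cobound V (\<lambda>ys. f (x # y # ys))) (map \<phi> xs)"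
        by (simp add: cobound_map_K avgL_cobound[OF mxs] f)
      show "avgL (cobound V (\<lambda>ys. f (x # y # ys))) (map \<phi> xs) \<in> C" by (simp add: f)
    qed
    also have "\<dots> = vavg (fib (\<phi> x)) (\<lambda>y. sub (avgL f1 (map \<phi> xs)) (sub (avgL (\<lambda>ws. f (y # ws)) (map \<phi> xs))
                      (avgL (\<lambda>ws. cobound V f (x # y # ws)) (map \<phi> xs))))"
    proof (rule vavg_cong[OF refl])
      fix y
      show "avgL (cobound V (\<lambda>ys. f (x # y # ys))) (map \<phi> xs) = sub (avgL f1 (map \<phi> xs)) (sub (avgL (\<lambda>ws. f (y # ws)) (map \<phi> xs))
                      (avgL (\<lambda>ws. cobound V f (x # y # ws)) (map \<phi> xs)))"
        unfolding key by (simp add: avgL_sub f f1)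
      show "sub (avgL f1 (map \<phi> xs)) (sub (avgL (\<lambda>ws. f (y # ws)) (map \<phi> xs))
                      (avgL (\<lambda>ws. cobound V f (x # y # ws)) (map \<phi> xs))) \<in> C"
        by (simp add: f f1)
    qed
    also have "\<dots> = sub (vavg (fib (\<phi> x)) (\<lambda>y. avgL f1 (map \<phi> xs)))
       (sub (vavg (fib (\<phi> x)) (\<lambda>y. avgL (\<lambda>ws. f (y # ws)) (map \<phi> xs)))
            (vavg (fib (\<phi> x)) (\<lambda>y. avgL (\<lambda>ws. cobound V f (x # y # ws)) (map \<phi> xs))))"
      by (simp add: vavg_sub f f1)
    also have "vavg (fib (\<phi> x)) (\<lambda>y. avgL f1 (map \<phi> xs)) = a1"
      unfolding a1_def by (rule vavg_const[OF fib_props[OF phi_in[OF x]]]) (simp add: f1)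
    also have "vavg (fib (\<phi> x)) (\<lambda>y. avgL (\<lambda>ws. f (y # ws)) (map \<phi> xs)) = a2"
      unfolding a2_def by simp
    also have "vavg (fib (\<phi> x)) (\<lambda>y. avgL (\<lambda>ws. cobound V f (x # y # ws)) (map \<phi> xs)) = e"
      unfolding e_def by simp
    finally show ?thesis .
  qed
  have s4: "hp (cobound V f) (x # xs) = sub e (sub P R)"
  proof -
    have "(\<lambda>zs. cobound V f (x # zs)) = (\<lambda>zs. sub (f zs) (cobound V f1 zs))"
      unfolding f1_def by (rule ext, rule cobound_Cons) (simp add: f)
    then have "hp (\<lambda>zs. cobound V f (x # zs)) xs = sub P R"
      unfolding P_def R_def by (simp add: hp_sub f f1)
    then show ?thesis unfolding e_def by simp
  qed
  have "add (cobound V (hp f) (x # xs)) (hp (cobound V f) (x # xs)) =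
        add (sub P (sub (sub a1 (sub a2 e)) Q)) (sub e (sub P R))"
    using s1 s2 s3 s4 by simp
  also have "\<dots> = sub a2 q" by (rule ident6[OF inC IH])
  finally show ?case unfolding a2_def q_def .
qed

lemma hp_zero:
  assumes "set xs \<subseteq> carrier \<Gamma>" "\<And>zs. G zs \<in> C"
    "\<And>zs. set zs \<subseteq> carrier \<Gamma> \<Longrightarrow> length zs = Suc (length xs) \<Longrightarrow> G zs = zero"
  shows "hp G xs = zero"
  using assms
proof (induct xs arbitrary: G)
  case Nil then show ?case by simp
next
  case (Cons x xs)
  have x: "x \<in> carrier \<Gamma>" and xs: "set xs \<subseteq> carrier \<Gamma>" using Cons.prems by auto
  have a: "avgL (\<lambda>ys. G (x # ys)) (map \<phi> (x # xs)) = zero"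
    by (rule avgL_const) (use Cons.prems x phi_in in \<open>auto dest!: arg_cong[where f=length]\<close>)
  have b: "hp (\<lambda>zs. G (x # zs)) xs = zero"
    by (rule Cons.hyps[OF xs]) (use Cons.prems x in auto)
  show ?case using a b by simp
qed

lemma hp_equiv:
  assumes g: "g \<in> carrier \<Gamma>" and "set xs \<subseteq> carrier \<Gamma>" "\<And>zs. F zs \<in> C" "\<And>zs. F' zs \<in> C"
    and "\<And>zs. set zs \<subseteq> carrier \<Gamma> \<Longrightarrow> F (map (\<lambda>z. g \<otimes>\<^bsub>\<Gamma>\<^esub> z) zs) = act' g (F' zs)"
  shows "hp F (map (\<lambda>z. g \<otimes>\<^bsub>\<Gamma>\<^esub> z) xs) = act' g (hp F' xs)"
  using assms(2-)
proof (induct xs arbitrary: F F')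
  case Nil then show ?case using g by simp
next
  case (Cons x xs)
  have x: "x \<in> carrier \<Gamma>" and xs: "set xs \<subseteq> carrier \<Gamma>" using Cons.prems by auto
  have m: "map \<phi> (map (\<lambda>z. g \<otimes>\<^bsub>\<Gamma>\<^esub> z) (x # xs)) = map (\<lambda>k. \<phi> g \<otimes>\<^bsub>K\<^esub> k) (map \<phi> (x # xs))"
    using g x xs by (auto simp: phi_mult)
  have rel: "F ((g \<otimes>\<^bsub>\<Gamma>\<^esub> x) # map (\<lambda>z. g \<otimes>\<^bsub>\<Gamma>\<^esub> z) zs) = act' g (F' (x # zs))" if "set zs \<subseteq> carrier \<Gamma>" for zs
    using Cons.prems(4)[of "x # zs"] that x by simp
  have a: "avgL (\<lambda>ys. F ((g \<otimes>\<^bsub>\<Gamma>\<^esub> x) # ys)) (map \<phi> (map (\<lambda>z. g \<otimes>\<^bsub>\<Gamma>\<^esub> z) (x # xs))) =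
      act' g (avgL (\<lambda>ys. F' (x # ys)) (map \<phi> (x # xs)))"
    unfolding m by (rule avgL_equiv[OF g]) (use x xs phi_in Cons.prems rel in auto)
  have b: "hp (\<lambda>zs. F ((g \<otimes>\<^bsub>\<Gamma>\<^esub> x) # zs)) (map (\<lambda>z. g \<otimes>\<^bsub>\<Gamma>\<^esub> z) xs) = act' g (hp (\<lambda>zs. F' (x # zs)) xs)"
    by (rule Cons.hyps[OF xs]) (use Cons.prems rel in auto)
  show ?case using a b g Cons.prems by (simp add: act_sub del: hp.simps) (simp add: act_sub)
qed

lemma hp_nrm:
  assumes "\<And>zs. F zs \<in> C" "\<And>zs. nrm (F zs) \<le> c" "0 \<le> c"
  shows "nrm (hp F xs) \<le> real (length xs) * c"
  using assms
proof (induct xs arbitrary: F)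
  case Nil then show ?case by simp
next
  case (Cons x xs)
  have "nrm (hp F (x # xs)) \<le> nrm (avgL (\<lambda>ys. F (x # ys)) (map \<phi> (x # xs))) + nrm (hp (\<lambda>zs. F (x # zs)) xs)"
    using Cons.prems by (simp add: nrm_sub_le)
  also have "\<dots> \<le> c + real (length xs) * c"
    by (rule add_mono, rule avgL_nrm) (use Cons in auto)
  finally show ?case by (simp add: algebra_simps)
qed

end


context vsp begin
lemma neg_sub: "u \<in> C \<Longrightarrow> w \<in> C \<Longrightarrow> neg (sub u w) = sub w u"
  by (simp add: vsub_def neg_add_distrib comm)
end

lemma tuples_ne: fixes G :: "('a, 'b) monoid_scheme" assumes that: "monoid G" shows "tuples G n \<noteq> {}"
proof -
  have o: "\<one>\<^bsub>G\<^esub> \<in> carrier G" by (rule monoid.one_closed[OF that])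
  have r: "set (replicate m \<one>\<^bsub>G\<^esub>) \<subseteq> carrier G" for m using o by (induct m) auto
  have "replicate (Suc n) \<one>\<^bsub>G\<^esub> \<in> tuples G n" unfolding tuples_def using r[of "Suc n"] by simp
  then show ?thesis by blast
qed


context setting begin

abbreviation "W \<equiv> fixmod \<Gamma> K \<phi> V"

lemma W_simps[simp]: "vcarrier W = {u \<in> C. \<forall>h\<in>H. act' h u = u}" "vzero W = zero"
  "vadd W = add" "vscale W = scl" "vnorm W = nrm"
  by (simp_all add: fixmod_def)

lemma vsub_W[simp]: "vsub W = sub"
  unfolding vsub_def[abs_def] W_simps ..

lemma cobound_W: "cobound W f ks = cobound VK f ks"
  by (rule cobound_fields) simp_all

lemma tuples_carrier: "xs \<in> tuples G n \<Longrightarrow> set xs \<subseteq> carrier G"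
  by (simp add: tuples_def)

lemma tuples_len: "xs \<in> tuples G n \<Longrightarrow> length xs = Suc n"
  by (simp add: tuples_def)

lemma map_phi_tuples: "xs \<in> tuples \<Gamma> n \<Longrightarrow> map \<phi> xs \<in> tuples K n"
  using phi_in by (auto simp: tuples_def)

definition lift :: "'k \<Rightarrow> 'g" where "lift k = (SOME g. g \<in> carrier \<Gamma> \<and> \<phi> g = k)"

lemma lift: "k \<in> carrier K \<Longrightarrow> lift k \<in> carrier \<Gamma> \<and> \<phi> (lift k) = k"
proof -
  assume k: "k \<in> carrier K"
  have "k \<in> \<phi> ` carrier \<Gamma>" using k surj by simp
  then obtain g where g: "g \<in> carrier \<Gamma>" "\<phi> g = k" by (metis imageE)
  show ?thesis unfolding lift_def by (rule someI2[of _ g]) (use g in simp_all)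
qed

lemma map_phi_lift: "set ks \<subseteq> carrier K \<Longrightarrow> map \<phi> (map lift ks) = ks"
proof (induct ks)
  case Nil then show ?case by simp
next
  case (Cons k ks) then show ?case using lift[of k] by simp
qed

lemma tuples_image: "map \<phi> ` tuples \<Gamma> n = tuples K n"
proof
  show "map \<phi> ` tuples \<Gamma> n \<subseteq> tuples K n" using map_phi_tuples by auto
  show "tuples K n \<subseteq> map \<phi> ` tuples \<Gamma> n"
  proof
    fix ks assume ks: "ks \<in> tuples K n"
    then have "map lift ks \<in> tuples \<Gamma> n" using lift by (auto simp: tuples_def)
    moreover have "map \<phi> (map lift ks) = ks" using ks map_phi_lift by (simp add: tuples_def)
    ultimately show "ks \<in> map \<phi> ` tuples \<Gamma> n" by (metis image_eqI)
  qed
qed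

lemma lifts_tuples: "set ys \<subseteq> carrier \<Gamma> \<Longrightarrow> map \<phi> ys = ks \<Longrightarrow> ks \<in> tuples K n \<Longrightarrow> ys \<in> tuples \<Gamma> n"
  unfolding tuples_def by (metis (mono_tags, lifting) length_map mem_Collect_eq)

lemma act_W: assumes "g \<in> carrier \<Gamma>" "u \<in> vcarrier W"
  shows "act W (\<phi> g) u = act' g u"
proof -
  define g0 where "g0 = (SOME g'. g' \<in> carrier \<Gamma> \<and> \<phi> g' = \<phi> g)"
  have g0: "g0 \<in> carrier \<Gamma>" "\<phi> g0 = \<phi> g" unfolding g0_def by (rule someI2[of _ g]; use assms in simp)+
  define h where "h = inv\<^bsub>\<Gamma>\<^esub> g \<otimes>\<^bsub>\<Gamma>\<^esub> g0"
  have hc: "h \<in> carrier \<Gamma>" using assms g0 by (simp add: h_def)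
  have "\<phi> h = inv\<^bsub>K\<^esub> \<phi> g \<otimes>\<^bsub>K\<^esub> \<phi> g" using assms g0 by (simp add: h_def phi_mult phi_inv)
  also have "\<dots> = \<one>\<^bsub>K\<^esub>" using assms phi_in by simp
  finally have hH: "h \<in> H" using hc by (simp add: kernel_def)
  have gh: "g0 = g \<otimes>\<^bsub>\<Gamma>\<^esub> h" using assms g0 G.inv_solve_left[of g0 g] unfolding h_def
    by (metis G.inv_closed G.inv_inv G.inv_solve_left' G.m_closed)
  have "act W (\<phi> g) u = act' g0 u" by (simp add: fixmod_def g0_def)
  also have "\<dots> = act' g (act' h u)" using gh assms hc by (simp add: act_mult)
  also have "act' h u = u" using assms hH by simp
  finally show ?thesis .
qed

definition tot :: "nat \<Rightarrow> ('g list \<Rightarrow> 'v) \<Rightarrow> 'g list \<Rightarrow> 'v" where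
  "tot n f xs = (if xs \<in> tuples \<Gamma> n then f xs else zero)"

lemma Cb_in: "f \<in> Cb G V' n \<Longrightarrow> xs \<in> tuples G n \<Longrightarrow> f xs \<in> vcarrier V'"
  by (simp add: Cb_def)

lemma Cb_bound: "f \<in> Cb G V' n \<Longrightarrow> \<exists>c\<ge>0. \<forall>xs\<in>tuples G n. vnorm V' (f xs) \<le> c"
proof -
  assume "f \<in> Cb G V' n"
  then obtain c where c: "\<forall>xs\<in>tuples G n. vnorm V' (f xs) \<le> c" unfolding Cb_def by blast
  have "\<forall>xs\<in>tuples G n. vnorm V' (f xs) \<le> max c 0" using c by (meson max.coboundedI1)
  then show ?thesis by (meson max.cobounded2)
qed

lemma Cb_equiv: "f \<in> Cb G V' n \<Longrightarrow> g \<in> carrier G \<Longrightarrow> xs \<in> tuples G n \<Longrightarrow>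
   f (map ((\<otimes>\<^bsub>G\<^esub>) g) xs) = act V' g (f xs)"
  by (simp add: Cb_def)

lemma tot_in[simp]: "f \<in> Cb \<Gamma> V n \<Longrightarrow> tot n f xs \<in> C"
  by (simp add: tot_def Cb_in)

lemma tot_eq[simp]: "xs \<in> tuples \<Gamma> n \<Longrightarrow> tot n f xs = f xs"
  by (simp add: tot_def)

lemma map_mult_tuples: "g \<in> carrier \<Gamma> \<Longrightarrow> set zs \<subseteq> carrier \<Gamma> \<Longrightarrow>
   (map (\<lambda>z. g \<otimes>\<^bsub>\<Gamma>\<^esub> z) zs \<in> tuples \<Gamma> n) = (zs \<in> tuples \<Gamma> n)"
  by (auto simp: tuples_def)

lemma tot_equiv: assumes "f \<in> Cb \<Gamma> V n" "g \<in> carrier \<Gamma>" "set zs \<subseteq> carrier \<Gamma>"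
  shows "tot n f (map (\<lambda>z. g \<otimes>\<^bsub>\<Gamma>\<^esub> z) zs) = act' g (tot n f zs)"
proof (cases "zs \<in> tuples \<Gamma> n")
  case True
  then show ?thesis using assms Cb_equiv[OF assms(1,2) True] map_mult_tuples[OF assms(2,3)]
    by (simp add: tot_def)
next
  case False
  then show ?thesis using assms map_mult_tuples[OF assms(2,3)] by (simp add: tot_def)
qed

lemma tot_bound: assumes "f \<in> Cb \<Gamma> V n" obtains c where "0 \<le> c" "\<And>zs. nrm (tot n f zs) \<le> c"
proof -
  obtain c where c: "0 \<le> c" "\<forall>xs\<in>tuples \<Gamma> n. nrm (f xs) \<le> c" using Cb_bound[OF assms] by blast
  then have "nrm (tot n f zs) \<le> c" for zs by (simp add: tot_def)
  then show ?thesis using c that by blast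
qed

definition Aop :: "nat \<Rightarrow> ('g list \<Rightarrow> 'v) \<Rightarrow> 'k list \<Rightarrow> 'v" where
  "Aop n f ks = avgL (tot n f) ks"

lemma Aop_Cb: assumes f: "f \<in> Cb \<Gamma> V n" shows "Aop n f \<in> Cb K W n"
proof -
  have T: "\<And>zs. tot n f zs \<in> C" using f by simp
  have fixd: "act' h (Aop n f ks) = Aop n f ks" if h: "h \<in> H" and ks: "set ks \<subseteq> carrier K" for h ks
  proof -
    have hc: "h \<in> carrier \<Gamma>" and ph: "\<phi> h = \<one>\<^bsub>K\<^esub>" using h by (auto simp: kernel_def)
    have "act' h (Aop n f ks) = avgL (tot n f) (map (\<lambda>k. \<phi> h \<otimes>\<^bsub>K\<^esub> k) ks)"
      unfolding Aop_def by (rule avgL_equiv[symmetric, OF hc ks T T]) (rule tot_equiv[OF f hc])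
    also have "map (\<lambda>k. \<phi> h \<otimes>\<^bsub>K\<^esub> k) ks = ks" using ks ph by (induct ks) auto
    finally show ?thesis by (simp add: Aop_def)
  qed
  obtain c where c: "0 \<le> c" "\<And>zs. nrm (tot n f zs) \<le> c" using tot_bound[OF f] by blast
  show ?thesis unfolding Cb_def
  proof (intro CollectI conjI ballI)
    fix ks assume ks: "ks \<in> tuples K n"
    show "Aop n f ks \<in> vcarrier W" using fixd[OF _ tuples_carrier[OF ks]] T by (simp add: Aop_def)
  next
    show "\<exists>C. \<forall>xs\<in>tuples K n. vnorm W (Aop n f xs) \<le> C"
    proof
      show "\<forall>xs\<in>tuples K n. vnorm W (Aop n f xs) \<le> c"
        unfolding Aop_def W_simps using avgL_nrm[of "tot n f" c] T c by blast
    qed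
  next
    fix k ks assume k: "k \<in> carrier K" and ks: "ks \<in> tuples K n"
    obtain g where g: "g \<in> carrier \<Gamma>" "\<phi> g = k" using lift[OF k] by blast
    have "Aop n f (map ((\<otimes>\<^bsub>K\<^esub>) k) ks) = act' g (Aop n f ks)"
      unfolding Aop_def using avgL_equiv[of g ks "tot n f" "tot n f", OF g(1) tuples_carrier[OF ks] T T tot_equiv[OF f g(1)]] g(2)
      by (simp add: comp_def)
    also have "\<dots> = act W k (Aop n f ks)"
      using act_W[OF g(1), of "Aop n f ks"] fixd[OF _ tuples_carrier[OF ks]] T g(2) by (simp add: Aop_def)
    finally show "Aop n f (map ((\<otimes>\<^bsub>K\<^esub>) k) ks) = act W k (Aop n f ks)" .
  qed
qed

lemma Aop_cobound: assumes f: "f \<in> Cb \<Gamma> V n" and ks: "ks \<in> tuples K (Suc n)"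
  shows "cobound W (Aop n f) ks = avgL (cobound V (tot n f)) ks"
  unfolding cobound_W Aop_def
  by (rule avgL_cobound[symmetric, OF tuples_carrier[OF ks]]) (simp add: f)

lemma cobound_tot: assumes ys: "ys \<in> tuples \<Gamma> (Suc n)"
  shows "cobound V (tot n f) ys = cobound V f ys"
proof (rule cobound_cong)
  fix zs assume "Suc (length zs) = length ys" "set zs \<subseteq> set ys"
  then have "zs \<in> tuples \<Gamma> n" using ys by (auto simp: tuples_def)
  then show "tot n f zs = f zs" by simp
qed

lemma infl_Cb: assumes f: "f \<in> Cb K W n" shows "infl \<phi> f \<in> Cb \<Gamma> V n"
proof -
  obtain c where c: "\<forall>xs\<in>tuples K n. nrm (f xs) \<le> c" using Cb_bound[OF f] by auto
  show ?thesis unfolding Cb_def infl_def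
  proof (intro CollectI conjI ballI)
    fix xs assume xs: "xs \<in> tuples \<Gamma> n"
    show "f (map \<phi> xs) \<in> C" using Cb_in[OF f map_phi_tuples[OF xs]] by simp
  next
    show "\<exists>C. \<forall>xs\<in>tuples \<Gamma> n. nrm (f (map \<phi> xs)) \<le> C" using c map_phi_tuples by blast
  next
    fix g xs assume g: "g \<in> carrier \<Gamma>" and xs: "xs \<in> tuples \<Gamma> n"
    have "map \<phi> (map ((\<otimes>\<^bsub>\<Gamma>\<^esub>) g) xs) = map ((\<otimes>\<^bsub>K\<^esub>) (\<phi> g)) (map \<phi> xs)"
      using g tuples_carrier[OF xs] by (auto simp: phi_mult)
    then have "f (map \<phi> (map ((\<otimes>\<^bsub>\<Gamma>\<^esub>) g) xs)) = act W (\<phi> g) (f (map \<phi> xs))"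
      using Cb_equiv[OF f phi_in[OF g] map_phi_tuples[OF xs]] by (simp only:)
    also have "\<dots> = act' g (f (map \<phi> xs))"
      by (rule act_W[OF g Cb_in[OF f map_phi_tuples[OF xs]]])
    finally show "f (map \<phi> (map ((\<otimes>\<^bsub>\<Gamma>\<^esub>) g) xs)) = act' g (f (map \<phi> xs))" .
  qed
qed

lemma cobound_infl: "cobound V (infl \<phi> f) xs = cobound W f (map \<phi> xs)"
  unfolding infl_def cobound_W by (rule cobound_map_K)

end


context setting begin

lemma Zb_Cb: "f \<in> Zb G V' n \<Longrightarrow> f \<in> Cb G V' n" by (simp add: Zb_def)
lemma Zb_cocycle: "f \<in> Zb G V' n \<Longrightarrow> xs \<in> tuples G (Suc n) \<Longrightarrow> cobound V' f xs = vzero V'"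
  by (simp add: Zb_def)

lemma tuplesK_lift: assumes "ks \<in> tuples K n" obtains xs where "xs \<in> tuples \<Gamma> n" "ks = map \<phi> xs"
  using assms tuples_image by (metis imageE)

lemma infl_inj:
  assumes f: "f \<in> Zb K W n" and cb: "is_cobdry \<Gamma> V n (infl \<phi> f)"
  shows "is_cobdry K W n f"
proof (cases n)
  case 0
  show ?thesis unfolding is_cobdry_def 0
  proof (simp, intro ballI)
    fix ks assume ks: "ks \<in> tuples K 0"
    then obtain xs where xs: "xs \<in> tuples \<Gamma> 0" "ks = map \<phi> xs" by (rule tuplesK_lift)
    show "f ks = zero" using cb xs unfolding is_cobdry_def 0 by (simp add: infl_def)
  qed
next
  case (Suc m)
  from cb obtain b where b: "b \<in> Cb \<Gamma> V m" "\<forall>xs\<in>tuples \<Gamma> n. infl \<phi> f xs = cobound V b xs"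
    unfolding is_cobdry_def Suc by auto
  have fC: "f \<in> Cb K W n" using f by (rule Zb_Cb)
  show ?thesis unfolding is_cobdry_def Suc
  proof (simp, rule bexI[of _ "Aop m b"], intro ballI)
    show "Aop m b \<in> Cb K W m" by (rule Aop_Cb[OF b(1)])
    fix ks assume ks: "ks \<in> tuples K (Suc m)"
    have "cobound W (Aop m b) ks = avgL (cobound V (tot m b)) ks" by (rule Aop_cobound[OF b(1) ks])
    also have "\<dots> = f ks"
    proof (rule avgL_const[OF tuples_carrier[OF ks]])
      show "f ks \<in> C" using Cb_in[OF fC] ks Suc by simp
      fix ys assume ys: "set ys \<subseteq> carrier \<Gamma>" "map \<phi> ys = ks"
      then have yt: "ys \<in> tuples \<Gamma> (Suc m)" using lifts_tuples ks by blast
      have "cobound V (tot m b) ys = cobound V b ys" by (rule cobound_tot[OF yt])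
      also have "\<dots> = infl \<phi> f ys" using b(2) yt Suc by simp
      also have "\<dots> = f ks" using ys by (simp add: infl_def)
      finally show "cobound V (tot m b) ys = f ks" .
    qed
    finally show "f ks = cobound W (Aop m b) ks" by simp
  qed
qed

lemma f0_const: assumes f: "f \<in> Zb \<Gamma> V 0" and x: "x \<in> carrier \<Gamma>" and y: "y \<in> carrier \<Gamma>"
  shows "f [y] = f [x]"
proof -
  have t: "[x, y] \<in> tuples \<Gamma> (Suc 0)" using x y by (simp add: tuples_def)
  have T: "\<And>zs. tot 0 f zs \<in> C" using Zb_Cb[OF f] by simp
  have "zero = cobound V f [x, y]" using Zb_cocycle[OF f t] by simp
  also have "\<dots> = cobound V (tot 0 f) [x, y]" by (rule cobound_tot[OF t, symmetric])
  also have "\<dots> = sub (tot 0 f [y]) (cobound V (\<lambda>zs. tot 0 f (x # zs)) [y])"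
    by (rule cobound_Cons[OF T])
  also have "cobound V (\<lambda>zs. tot 0 f (x # zs)) [y] = sub (tot 0 f [x]) (cobound V (\<lambda>zs. tot 0 f (x # y # zs)) [])"
    by (rule cobound_Cons) (simp add: T)
  also have "cobound V (\<lambda>zs. tot 0 f (x # y # zs)) [] = zero" by (simp add: cobound_def)
  moreover have fx: "f [x] \<in> C" "f [y] \<in> C" using Cb_in[OF Zb_Cb[OF f]] x y by (simp_all add: tuples_def)
  ultimately have "zero = sub (f [y]) (f [x])" using x y T by (simp add: tuples_def)
  then have "sub (f [y]) (f [x]) = zero" by simp
  then show ?thesis using sub_eq_zero_iff[OF fx(2,1)] by simp
qed

lemma infl_surj:
  assumes f': "f' \<in> Zb \<Gamma> V n"
  shows "\<exists>f\<in>Zb K W n. cohomologous \<Gamma> V n f' (infl \<phi> f)"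
proof -
  have fC: "f' \<in> Cb \<Gamma> V n" using f' by (rule Zb_Cb)
  define T where "T = tot n f'"
  have T: "\<And>zs. T zs \<in> C" using fC by (simp add: T_def)
  have AZ: "Aop n f' \<in> Zb K W n"
    unfolding Zb_def
  proof (intro CollectI conjI ballI)
    show "Aop n f' \<in> Cb K W n" by (rule Aop_Cb[OF fC])
    fix ks assume ks: "ks \<in> tuples K (Suc n)"
    have "cobound W (Aop n f') ks = avgL (cobound V (tot n f')) ks" by (rule Aop_cobound[OF fC ks])
    also have "\<dots> = zero"
    proof (rule avgL_const[OF tuples_carrier[OF ks] zero_in])
      fix ys assume ys: "set ys \<subseteq> carrier \<Gamma>" "map \<phi> ys = ks"
      then have yt: "ys \<in> tuples \<Gamma> (Suc n)" using lifts_tuples ks by blast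
      show "cobound V (tot n f') ys = zero" using cobound_tot[OF yt] Zb_cocycle[OF f' yt] by simp
    qed
    finally show "cobound W (Aop n f') ks = vzero W" by simp
  qed
  have inflA: "infl \<phi> (Aop n f') xs = avgL T (map \<phi> xs)" for xs
    by (simp add: infl_def Aop_def T_def)
  have coh: "cohomologous \<Gamma> V n f' (infl \<phi> (Aop n f'))"
  proof (cases n)
    case 0
    have fC: "f' \<in> Cb \<Gamma> V 0" using fC 0 by simp
    show ?thesis unfolding cohomologous_def is_cobdry_def 0
    proof (simp, intro ballI)
      fix xs assume xs: "xs \<in> tuples \<Gamma> 0"
      then obtain x where x: "xs = [x]" "x \<in> carrier \<Gamma>" by (auto simp: tuples_def length_Suc_conv)
      have "avgL T (map \<phi> xs) = f' [x]"
      proof (rule avgL_const)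
        show "set (map \<phi> xs) \<subseteq> carrier K" using x phi_in by simp
        show "f' [x] \<in> C" using Cb_in[OF fC xs] x by simp
        fix ys assume ys: "set ys \<subseteq> carrier \<Gamma>" "map \<phi> ys = map \<phi> xs"
        then obtain y where y: "ys = [y]" "y \<in> carrier \<Gamma>" using x by (auto simp: length_Suc_conv dest!: arg_cong[where f=length])
        have "T ys = f' [y]" using y 0 by (simp add: T_def tuples_def)
        also have "\<dots> = f' [x]" using f0_const[of f' x y] f' 0 x y by simp
        finally show "T ys = f' [x]" .
      qed
      then show "sub (f' xs) (infl \<phi> (Aop 0 f') xs) = zero"
        using inflA[of xs] x Cb_in[OF fC xs] 0 by (simp add: T_def)
    qed
  next
    case (Suc m)
    define b where "b xs = neg (hp T xs)" for xs
    obtain c where c: "0 \<le> c" "\<And>zs. nrm (T zs) \<le> c" using tot_bound[OF fC] T_def by metis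
    have bC: "b \<in> Cb \<Gamma> V m" unfolding Cb_def
    proof (intro CollectI conjI ballI)
      fix xs assume "xs \<in> tuples \<Gamma> m"
      show "b xs \<in> C" by (simp add: b_def T)
    next
      show "\<exists>C. \<forall>xs\<in>tuples \<Gamma> m. nrm (b xs) \<le> C"
      proof (intro exI ballI)
        fix xs assume xs: "xs \<in> tuples \<Gamma> m"
        have "nrm (b xs) = nrm (hp T xs)" by (simp add: b_def T)
        also have "\<dots> \<le> real (length xs) * c" by (rule hp_nrm[OF T c(2) c(1)])
        also have "\<dots> = real (Suc m) * c" using tuples_len[OF xs] by simp
        finally show "nrm (b xs) \<le> real (Suc m) * c" .
      qed
    next
      fix g xs assume g: "g \<in> carrier \<Gamma>" and xs: "xs \<in> tuples \<Gamma> m"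
      have "hp T (map (\<lambda>z. g \<otimes>\<^bsub>\<Gamma>\<^esub> z) xs) = act' g (hp T xs)"
        by (rule hp_equiv[OF g tuples_carrier[OF xs] T T]) (simp add: T_def tot_equiv[OF fC g])
      then show "b (map ((\<otimes>\<^bsub>\<Gamma>\<^esub>) g) xs) = act' g (b xs)"
        using g by (simp add: b_def act_scl T)
    qed
    show ?thesis unfolding cohomologous_def is_cobdry_def Suc
    proof (simp, rule bexI[OF _ bC], intro ballI)
      fix xs assume xs: "xs \<in> tuples \<Gamma> (Suc m)"
      have hz: "hp (cobound V T) xs = zero"
      proof (rule hp_zero[OF tuples_carrier[OF xs]])
        show "\<And>zs. cobound V T zs \<in> C" using T by simp
        fix zs assume zs: "set zs \<subseteq> carrier \<Gamma>" "length zs = Suc (length xs)"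
        then have zt: "zs \<in> tuples \<Gamma> (Suc n)" using tuples_len[OF xs] Suc by (simp add: tuples_def)
        show "cobound V T zs = zero" using cobound_tot[OF zt] Zb_cocycle[OF f' zt] by (simp add: T_def)
      qed
      have main: "add (cobound V (hp T) xs) (hp (cobound V T) xs) = sub (avgL T (map \<phi> xs)) (T xs)"
        by (rule hp_main[OF tuples_carrier[OF xs] T])
      have Txs: "T xs = f' xs" using xs Suc by (simp add: T_def)
      have cb: "cobound V (hp T) xs = sub (infl \<phi> (Aop (Suc m) f') xs) (f' xs)"
        using main hz Txs inflA[of xs] T Suc by simp
      have "cobound V b xs = neg (cobound V (hp T) xs)"
        unfolding b_def by (rule cobound_scl) (simp add: T)
      also have "\<dots> = sub (f' xs) (infl \<phi> (Aop (Suc m) f') xs)"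
        unfolding cb by (rule neg_sub) (use Cb_in[OF fC] xs Suc inflA[of xs] T in simp_all)
      finally show "sub (f' xs) (infl \<phi> (Aop (Suc m) f') xs) = cobound V b xs" by simp
    qed
  qed
  show ?thesis using AZ coh by blast
qed

end


context setting begin

lemma supnorm_nonneg:
  assumes "\<forall>xs\<in>tuples G n. 0 \<le> vnorm V' (f xs)" "\<exists>c. \<forall>xs\<in>tuples G n. vnorm V' (f xs) \<le> c"
    "tuples G n \<noteq> {}"
  shows "0 \<le> supnorm G V' n f"
proof -
  obtain xs where xs: "xs \<in> tuples G n" using assms(3) by blast
  have "bdd_above ((\<lambda>xs. vnorm V' (f xs)) ` tuples G n)" using assms(2) by (auto simp: bdd_above_def)
  then have "vnorm V' (f xs) \<le> supnorm G V' n f" unfolding supnorm_def using xs by (rule cSUP_upper2) simp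
  then show ?thesis using assms(1) xs by fastforce
qed

lemma supnorm_nonneg_G: "F \<in> Cb \<Gamma> V n \<Longrightarrow> 0 \<le> supnorm \<Gamma> V n F"
  by (rule supnorm_nonneg) (auto simp: Cb_def Cb_in tuples_ne[OF G.is_monoid])

lemma supnorm_nonneg_K: "F \<in> Cb K W n \<Longrightarrow> 0 \<le> supnorm K W n F"
  by (rule supnorm_nonneg) (auto simp: Cb_def Cb_in tuples_ne[OF KK.is_monoid])

lemma coh_infl:
  assumes f: "f \<in> Cb K W n" and f'': "f'' \<in> Cb K W n" and coh: "cohomologous K W n f f''"
  shows "cohomologous \<Gamma> V n (infl \<phi> f) (infl \<phi> f'')"
proof (cases n)
  case 0
  then show ?thesis using coh map_phi_tuples unfolding cohomologous_def is_cobdry_def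
    by (simp add: infl_def)
next
  case (Suc m)
  from coh obtain b where b: "b \<in> Cb K W m" "\<forall>ks\<in>tuples K n. sub (f ks) (f'' ks) = cobound W b ks"
    unfolding cohomologous_def is_cobdry_def Suc by auto
  show ?thesis unfolding cohomologous_def is_cobdry_def Suc
  proof (simp, rule bexI[OF _ infl_Cb[OF b(1)]], intro ballI)
    fix xs assume xs: "xs \<in> tuples \<Gamma> (Suc m)"
    have "sub (infl \<phi> f xs) (infl \<phi> f'' xs) = cobound W b (map \<phi> xs)"
      using b(2) map_phi_tuples[OF xs] Suc by (simp add: infl_def)
    also have "\<dots> = cobound V (infl \<phi> b) xs" by (rule cobound_infl[symmetric])
    finally show "sub (infl \<phi> f xs) (infl \<phi> f'' xs) = cobound V (infl \<phi> b) xs" .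
  qed
qed

lemma supnorm_infl: "supnorm \<Gamma> V n (infl \<phi> f) = supnorm K W n f"
proof -
  have "(\<lambda>xs. nrm (f (map \<phi> xs))) ` tuples \<Gamma> n = (\<lambda>ks. nrm (f ks)) ` tuples K n"
    unfolding tuples_image[symmetric] image_image ..
  then show ?thesis unfolding supnorm_def infl_def by simp
qed

lemma coh_Aop:
  assumes f: "f \<in> Cb K W n" and F: "F \<in> Cb \<Gamma> V n" and coh: "cohomologous \<Gamma> V n (infl \<phi> f) F"
  shows "cohomologous K W n f (Aop n F)"
proof (cases n)
  case 0
  have fC: "f \<in> Cb K W 0" "F \<in> Cb \<Gamma> V 0" using f F 0 by simp_all
  show ?thesis unfolding cohomologous_def is_cobdry_def 0
  proof (simp, intro ballI)
    fix ks assume ks: "ks \<in> tuples K 0"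
    have fks: "f ks \<in> C" using Cb_in[OF fC(1) ks] by simp
    have "Aop 0 F ks = f ks" unfolding Aop_def
    proof (rule avgL_const[OF tuples_carrier[OF ks] fks])
      fix ys assume ys: "set ys \<subseteq> carrier \<Gamma>" "map \<phi> ys = ks"
      then have yt: "ys \<in> tuples \<Gamma> 0" using lifts_tuples ks by blast
      have "sub (infl \<phi> f ys) (F ys) = zero" using coh yt 0 unfolding cohomologous_def is_cobdry_def by simp
      then have "infl \<phi> f ys = F ys"
        using sub_eq_zero_iff Cb_in[OF fC(2) yt] Cb_in[OF fC(1) map_phi_tuples[OF yt]] by (simp add: infl_def)
      then show "tot 0 F ys = f ks" using yt ys by (simp add: infl_def)
    qed
    then show "sub (f ks) (Aop 0 F ks) = zero" using fks by simp
  qed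
next
  case (Suc m)
  from coh obtain b where b: "b \<in> Cb \<Gamma> V m" "\<forall>xs\<in>tuples \<Gamma> n. sub (infl \<phi> f xs) (F xs) = cobound V b xs"
    unfolding cohomologous_def is_cobdry_def Suc by auto
  show ?thesis unfolding cohomologous_def is_cobdry_def Suc
  proof (simp, rule bexI[OF _ Aop_Cb[OF b(1)]], intro ballI)
    fix ks assume ks: "ks \<in> tuples K (Suc m)"
    have fks: "f ks \<in> C" using Cb_in[OF f] ks Suc by simp
    have T: "\<And>zs. tot n F zs \<in> C" using F by simp
    have "cobound W (Aop m b) ks = avgL (cobound V (tot m b)) ks" by (rule Aop_cobound[OF b(1) ks])
    also have "\<dots> = avgL (\<lambda>ys. sub (f ks) (tot n F ys)) ks"
    proof (rule avgL_cong)
      fix ys assume ys: "set ys \<subseteq> carrier \<Gamma>" "map \<phi> ys = ks"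
      then have yt: "ys \<in> tuples \<Gamma> (Suc m)" using lifts_tuples ks by blast
      have "cobound V (tot m b) ys = cobound V b ys" by (rule cobound_tot[OF yt])
      also have "\<dots> = sub (infl \<phi> f ys) (F ys)" using b(2) yt Suc by simp
      finally show "cobound V (tot m b) ys = sub (f ks) (tot n F ys)" using ys yt Suc by (simp add: infl_def)
    qed (simp add: fks T)
    also have "\<dots> = sub (avgL (\<lambda>ys. f ks) ks) (avgL (tot n F) ks)" by (rule avgL_sub) (simp_all add: fks T)
    also have "avgL (\<lambda>ys. f ks) ks = f ks" by (rule avgL_const[OF tuples_carrier[OF ks] fks]) simp
    finally have X: "cobound W (Aop m b) ks = sub (f ks) (avgL (tot n F) ks)" .
    have "Aop (Suc m) F ks = avgL (tot n F) ks" using Suc by (simp add: Aop_def)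
    then show "sub (f ks) (Aop (Suc m) F ks) = cobound W (Aop m b) ks" using X by simp
  qed
qed

lemma supnorm_Aop: assumes F: "F \<in> Cb \<Gamma> V n" shows "supnorm K W n (Aop n F) \<le> supnorm \<Gamma> V n F"
proof -
  let ?S = "supnorm \<Gamma> V n F"
  have S0: "0 \<le> ?S" by (rule supnorm_nonneg_G[OF F])
  obtain c where c: "\<forall>xs\<in>tuples \<Gamma> n. nrm (F xs) \<le> c" using Cb_bound[OF F] by auto
  have bdd: "bdd_above ((\<lambda>xs. nrm (F xs)) ` tuples \<Gamma> n)" using c by (auto simp: bdd_above_def)
  have tb: "nrm (tot n F zs) \<le> ?S" for zs
  proof (cases "zs \<in> tuples \<Gamma> n")
    case True then show ?thesis unfolding supnorm_def using cSUP_upper[OF True bdd] by simp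
  next
    case False then show ?thesis using S0 by (simp add: tot_def)
  qed
  have T: "\<And>zs. tot n F zs \<in> C" using F by simp
  show ?thesis unfolding supnorm_def[of K]
  proof (rule cSUP_least)
    show "tuples K n \<noteq> {}" by (rule tuples_ne[OF KK.is_monoid])
    fix ks show "vnorm W (Aop n F ks) \<le> ?S" unfolding Aop_def W_simps by (rule avgL_nrm[OF T tb S0])
  qed
qed

lemma coh_refl: assumes f: "f \<in> Cb K W n" shows "cohomologous K W n f f"
proof (cases n)
  case 0 then show ?thesis unfolding cohomologous_def is_cobdry_def
    using Cb_in[OF f] by simp
next
  case (Suc m)
  have z: "(\<lambda>_. zero) \<in> Cb K W m" unfolding Cb_def
  proof (intro CollectI conjI ballI)
    fix k ks assume k: "k \<in> carrier K"
    have "\<forall>h\<in>H. act' h zero = zero" by (auto simp: kernel_def)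
    then show "zero = act W k zero" using act_W[of "lift k" zero] lift[OF k] by simp
  qed (auto simp: kernel_def)
  show ?thesis unfolding cohomologous_def is_cobdry_def Suc
  proof (simp, rule bexI[OF _ z], intro ballI)
    fix ks assume ks: "ks \<in> tuples K (Suc m)"
    have "cobound W (\<lambda>_. zero) ks = zero" unfolding cobound_W using VK.cobound_zero by simp
    then show "sub (f ks) (f ks) = cobound W (\<lambda>_. zero) ks" using Cb_in[OF f] ks Suc by simp
  qed
qed

lemma infl_iso_norm:
  assumes f: "f \<in> Zb K W n"
  shows "hb_norm \<Gamma> V n (infl \<phi> f) = hb_norm K W n f"
proof -
  have fC: "f \<in> Cb K W n" using f by (rule Zb_Cb)
  define SK where "SK = {f'' \<in> Cb K W n. cohomologous K W n f f''}"
  define SG where "SG = {F \<in> Cb \<Gamma> V n. cohomologous \<Gamma> V n (infl \<phi> f) F}"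
  have SKne: "SK \<noteq> {}" using fC coh_refl[OF fC] by (auto simp: SK_def)
  have SGne: "SG \<noteq> {}" using infl_Cb[OF fC] coh_infl[OF fC fC coh_refl[OF fC]] by (auto simp: SG_def)
  have bK: "bdd_below ((\<lambda>g. supnorm K W n g) ` SK)"
    by (rule bdd_belowI[of _ 0]) (auto simp: SK_def supnorm_nonneg_K)
  have bG: "bdd_below ((\<lambda>g. supnorm \<Gamma> V n g) ` SG)"
    by (rule bdd_belowI[of _ 0]) (auto simp: SG_def supnorm_nonneg_G)
  have 1: "(INF g\<in>SG. supnorm \<Gamma> V n g) \<le> (INF g\<in>SK. supnorm K W n g)"
  proof (rule cINF_greatest[OF SKne])
    fix f'' assume "f'' \<in> SK"
    then have f'': "f'' \<in> Cb K W n" "cohomologous K W n f f''" by (auto simp: SK_def)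
    have "infl \<phi> f'' \<in> SG" using infl_Cb[OF f''(1)] coh_infl[OF fC f''] by (simp add: SG_def)
    then have "(INF g\<in>SG. supnorm \<Gamma> V n g) \<le> supnorm \<Gamma> V n (infl \<phi> f'')" by (rule cINF_lower[OF bG])
    then show "(INF g\<in>SG. supnorm \<Gamma> V n g) \<le> supnorm K W n f''" by (simp add: supnorm_infl)
  qed
  have 2: "(INF g\<in>SK. supnorm K W n g) \<le> (INF g\<in>SG. supnorm \<Gamma> V n g)"
  proof (rule cINF_greatest[OF SGne])
    fix F assume "F \<in> SG"
    then have F: "F \<in> Cb \<Gamma> V n" "cohomologous \<Gamma> V n (infl \<phi> f) F" by (auto simp: SG_def)
    have "Aop n F \<in> SK" using Aop_Cb[OF F(1)] coh_Aop[OF fC F] by (simp add: SK_def)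
    then have "(INF g\<in>SK. supnorm K W n g) \<le> supnorm K W n (Aop n F)" by (rule cINF_lower[OF bK])
    also have "\<dots> \<le> supnorm \<Gamma> V n F" by (rule supnorm_Aop[OF F(1)])
    finally show "(INF g\<in>SK. supnorm K W n g) \<le> supnorm \<Gamma> V n F" .
  qed
  show ?thesis unfolding hb_norm_def SK_def[symmetric] SG_def[symmetric] using 1 2 by simp
qed

theorem infl_iso: "infl_isometric_iso \<Gamma> K \<phi> V n"
  unfolding infl_isometric_iso_def infl_bij_def
  using infl_inj infl_surj infl_iso_norm by blast

end


definition L0 :: "'g monoid \<Rightarrow> ('g \<Rightarrow> real) set" where
  "L0 G = {u. (\<forall>x. x \<notin> carrier G \<longrightarrow> u x = 0) \<and> u summable_on carrier G \<and> infsum u (carrier G) = 0}"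

definition enc :: "('g \<Rightarrow> real) \<Rightarrow> ('g \<Rightarrow> real) set set" where "enc u = {{u}}"
definition dec :: "('g \<Rightarrow> real) set set \<Rightarrow> ('g \<Rightarrow> real)" where "dec X = the_elem (the_elem X)"

lemma dec_enc[simp]: "dec (enc u) = u" by (simp add: enc_def dec_def)
lemma enc_inj[simp]: "enc u = enc w \<longleftrightarrow> u = w" by (simp add: enc_def)

definition tr :: "'g monoid \<Rightarrow> 'g \<Rightarrow> ('g \<Rightarrow> real) \<Rightarrow> ('g \<Rightarrow> real)" where
  "tr G g u = (\<lambda>x. if x \<in> carrier G then u (inv\<^bsub>G\<^esub> g \<otimes>\<^bsub>G\<^esub> x) else 0)"

definition Lmod :: "'g monoid \<Rightarrow> ('g, ('g \<Rightarrow> real) set set) gmod" where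
  "Lmod G = \<lparr>vcarrier = enc ` L0 G, vzero = enc (\<lambda>_. 0),
     vadd = (\<lambda>X Y. enc (\<lambda>x. dec X x + dec Y x)),
     vscale = (\<lambda>a X. enc (\<lambda>x. a * dec X x)),
     vnorm = (\<lambda>X. infsum (\<lambda>x. \<bar>dec X x\<bar>) (carrier G)),
     act = (\<lambda>g X. enc (tr G g (dec X)))\<rparr>"

lemma Lmod_simps[simp]: "vcarrier (Lmod G) = enc ` L0 G" "vzero (Lmod G) = enc (\<lambda>_. 0)"
  "vadd (Lmod G) X Y = enc (\<lambda>x. dec X x + dec Y x)"
  "vscale (Lmod G) a X = enc (\<lambda>x. a * dec X x)"
  "vnorm (Lmod G) X = infsum (\<lambda>x. \<bar>dec X x\<bar>) (carrier G)"
  "act (Lmod G) g X = enc (tr G g (dec X))"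
  by (simp_all add: Lmod_def)

lemma L0_D: "u \<in> L0 G \<Longrightarrow> x \<notin> carrier G \<Longrightarrow> u x = 0"
  "u \<in> L0 G \<Longrightarrow> u summable_on carrier G" "u \<in> L0 G \<Longrightarrow> infsum u (carrier G) = 0"
  by (simp_all add: L0_def)

lemma abs_summ: fixes u :: "'a \<Rightarrow> real" shows "u summable_on A \<Longrightarrow> (\<lambda>x. \<bar>u x\<bar>) summable_on A"
  using summable_on_iff_abs_summable_on_real[of u A] by (simp add: real_norm_def)

lemma summ_abs: fixes u :: "'a \<Rightarrow> real" shows "(\<lambda>x. \<bar>u x\<bar>) summable_on A \<Longrightarrow> u summable_on A"
  using summable_on_iff_abs_summable_on_real[of u A] by (simp add: real_norm_def)

lemma L0_zero: "(\<lambda>_. 0) \<in> L0 G" by (simp add: L0_def)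

lemma L0_add: "u \<in> L0 G \<Longrightarrow> w \<in> L0 G \<Longrightarrow> (\<lambda>x. u x + w x) \<in> L0 G"
  unfolding L0_def by (auto simp: summable_on_add infsum_add)

lemma L0_scl: "u \<in> L0 G \<Longrightarrow> (\<lambda>x. a * u x) \<in> L0 G"
  unfolding L0_def by (auto simp: summable_on_cmult_right infsum_cmult_right')

lemma point_le: fixes f :: "'a \<Rightarrow> real" assumes "f summable_on A" "\<And>x. x \<in> A \<Longrightarrow> 0 \<le> f x" "x \<in> A"
  shows "f x \<le> infsum f A"
  using finite_sum_le_infsum[of f A "{x}"] assms by simp

lemma sum_le: fixes f :: "'a \<Rightarrow> real" assumes "f summable_on A" "\<And>x. x \<in> A \<Longrightarrow> 0 \<le> f x" "finite B" "B \<subseteq> A"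
  shows "sum f B \<le> infsum f A"
  using finite_sum_le_infsum[of f A B] assms by auto

context
  fixes G :: "'g monoid"
  assumes grp: "group G"
begin

interpretation G: group G by (rule grp)

lemma transl_bij: "g \<in> carrier G \<Longrightarrow> bij_betw (\<lambda>x. inv\<^bsub>G\<^esub> g \<otimes>\<^bsub>G\<^esub> x) (carrier G) (carrier G)"
  by (rule bij_betwI[where g="\<lambda>x. g \<otimes>\<^bsub>G\<^esub> x"]) (auto simp: G.m_assoc[symmetric])

lemma infsum_tr: assumes g: "g \<in> carrier G"
  shows "infsum (\<lambda>x. f (tr G g u x)) (carrier G) = infsum (\<lambda>x. f (u x)) (carrier G)"
proof -
  have "infsum (\<lambda>x. f (tr G g u x)) (carrier G) = infsum (\<lambda>x. f (u (inv\<^bsub>G\<^esub> g \<otimes>\<^bsub>G\<^esub> x))) (carrier G)"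
    by (rule infsum_cong) (simp add: tr_def)
  also have "\<dots> = infsum (\<lambda>x. f (u x)) (carrier G)"
    by (rule infsum_reindex_bij_betw[OF transl_bij[OF g], of "\<lambda>x. f (u x)"])
  finally show ?thesis .
qed

lemma summable_tr: assumes g: "g \<in> carrier G"
  shows "(\<lambda>x. f (tr G g u x)) summable_on (carrier G) \<longleftrightarrow> (\<lambda>x. f (u x)) summable_on (carrier G)"
proof -
  have "(\<lambda>x. f (tr G g u x)) summable_on (carrier G) \<longleftrightarrow> (\<lambda>x. f (u (inv\<^bsub>G\<^esub> g \<otimes>\<^bsub>G\<^esub> x))) summable_on (carrier G)"
    by (rule summable_on_cong) (simp add: tr_def)
  also have "\<dots> \<longleftrightarrow> (\<lambda>x. f (u x)) summable_on (carrier G)"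
    by (rule summable_on_reindex_bij_betw[OF transl_bij[OF g], of "\<lambda>x. f (u x)"])
  finally show ?thesis .
qed

lemma L0_tr: assumes g: "g \<in> carrier G" and u: "u \<in> L0 G" shows "tr G g u \<in> L0 G"
  unfolding L0_def
proof (intro CollectI conjI allI impI)
  show "tr G g u x = 0" if "x \<notin> carrier G" for x using that by (simp add: tr_def)
  show "tr G g u summable_on carrier G" using summable_tr[OF g, of "\<lambda>x. x" u] L0_D(2)[OF u] by simp
  show "infsum (tr G g u) (carrier G) = 0" using infsum_tr[OF g, of "\<lambda>x. x" u] L0_D(3)[OF u] by simp
qed

lemma nrm_zero_L: assumes u: "u \<in> L0 G" and z: "infsum (\<lambda>x. \<bar>u x\<bar>) (carrier G) = 0"
  shows "u = (\<lambda>_. 0)"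
proof
  fix x
  show "u x = 0"
  proof (cases "x \<in> carrier G")
    case True
    have "\<bar>u x\<bar> \<le> infsum (\<lambda>x. \<bar>u x\<bar>) (carrier G)"
      by (rule point_le[OF abs_summ[OF L0_D(2)[OF u]]]) (use True in auto)
    then show ?thesis using z by simp
  next
    case False then show ?thesis using L0_D(1)[OF u] by simp
  qed
qed

lemma tri_L: fixes u w :: "'a \<Rightarrow> real" assumes u: "u summable_on A" and w: "w summable_on A"
  shows "infsum (\<lambda>x. \<bar>u x + w x\<bar>) A \<le> infsum (\<lambda>x. \<bar>u x\<bar>) A + infsum (\<lambda>x. \<bar>w x\<bar>) A"
proof -
  have "infsum (\<lambda>x. \<bar>u x + w x\<bar>) A \<le> infsum (\<lambda>x. \<bar>u x\<bar> + \<bar>w x\<bar>) A"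
  proof (rule infsum_mono)
    show "(\<lambda>x. \<bar>u x + w x\<bar>) summable_on A" by (rule abs_summ, rule summable_on_add[OF u w])
    show "(\<lambda>x. \<bar>u x\<bar> + \<bar>w x\<bar>) summable_on A" by (rule summable_on_add[OF abs_summ[OF u] abs_summ[OF w]])
  qed (rule abs_triangle_ineq)
  also have "\<dots> = infsum (\<lambda>x. \<bar>u x\<bar>) A + infsum (\<lambda>x. \<bar>w x\<bar>) A"
    by (rule infsum_add) (auto intro: abs_summ u w)
  finally show ?thesis .
qed

lemma Lmod_normed_space: "normed_space (Lmod G)"
  unfolding normed_space_def Lmod_simps
proof (intro conjI ballI allI)
  show "enc (\<lambda>_. 0) \<in> enc ` L0 G" using L0_zero by blast
  fix X Y Z a b
  assume X: "X \<in> enc ` L0 G"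
  then obtain u where u: "u \<in> L0 G" "X = enc u" by blast
  show "enc (\<lambda>x. a * dec X x) \<in> enc ` L0 G" using u L0_scl by auto
  show "enc (\<lambda>x. dec X x + dec (enc (\<lambda>_. 0)) x) = X" using u by simp
  show "enc (\<lambda>x. dec X x + dec (enc (\<lambda>x. -1 * dec X x)) x) = enc (\<lambda>_. 0)" by simp
  show "enc (\<lambda>x. a * dec (enc (\<lambda>x. b * dec X x)) x) = enc (\<lambda>x. (a * b) * dec X x)" by (simp add: mult.assoc)
  show "enc (\<lambda>x. 1 * dec X x) = X" using u by simp
  show "enc (\<lambda>x. (a + b) * dec X x) = enc (\<lambda>x. dec (enc (\<lambda>x. a * dec X x)) x + dec (enc (\<lambda>x. b * dec X x)) x)"
    by (simp add: algebra_simps)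
  show "0 \<le> infsum (\<lambda>x. \<bar>dec X x\<bar>) (carrier G)" by (rule infsum_nonneg) simp
  show "(infsum (\<lambda>x. \<bar>dec X x\<bar>) (carrier G) = 0) = (X = enc (\<lambda>_. 0))"
    using u nrm_zero_L[of u] by auto
  show "infsum (\<lambda>x. \<bar>dec (enc (\<lambda>x. a * dec X x)) x\<bar>) (carrier G) = \<bar>a\<bar> * infsum (\<lambda>x. \<bar>dec X x\<bar>) (carrier G)"
    by (simp add: abs_mult infsum_cmult_right')
  assume Y: "Y \<in> enc ` L0 G"
  then obtain w where w: "w \<in> L0 G" "Y = enc w" by blast
  show "enc (\<lambda>x. dec X x + dec Y x) \<in> enc ` L0 G" using u w L0_add by auto
  show "enc (\<lambda>x. dec X x + dec Y x) = enc (\<lambda>x. dec Y x + dec X x)" by (simp add: add.commute)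
  show "enc (\<lambda>x. a * dec (enc (\<lambda>x. dec X x + dec Y x)) x) =
        enc (\<lambda>x. dec (enc (\<lambda>x. a * dec X x)) x + dec (enc (\<lambda>x. a * dec Y x)) x)"
    by (simp add: algebra_simps)
  show "infsum (\<lambda>x. \<bar>dec (enc (\<lambda>x. dec X x + dec Y x)) x\<bar>) (carrier G)
        \<le> infsum (\<lambda>x. \<bar>dec X x\<bar>) (carrier G) + infsum (\<lambda>x. \<bar>dec Y x\<bar>) (carrier G)"
    using tri_L[OF L0_D(2)[OF u(1)] L0_D(2)[OF w(1)]] u w by simp
  assume Z: "Z \<in> enc ` L0 G"
  show "enc (\<lambda>x. dec (enc (\<lambda>x. dec X x + dec Y x)) x + dec Z x) =
        enc (\<lambda>x. dec X x + dec (enc (\<lambda>x. dec Y x + dec Z x)) x)" by (simp add: algebra_simps)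
qed

lemma Lmod_normed_gmod: "normed_gmod G (Lmod G)"
  unfolding normed_gmod_def
proof (intro conjI ballI allI Lmod_normed_space)
  fix g X assume g: "g \<in> carrier G" and X: "X \<in> vcarrier (Lmod G)"
  then obtain u where u: "u \<in> L0 G" "X = enc u" by auto
  show "act (Lmod G) g X \<in> vcarrier (Lmod G)" using L0_tr[OF g u(1)] u by simp
  show "vnorm (Lmod G) (act (Lmod G) g X) = vnorm (Lmod G) X"
    using infsum_tr[OF g, of abs u] u by simp
  fix a show "act (Lmod G) g (vscale (Lmod G) a X) = vscale (Lmod G) a (act (Lmod G) g X)"
    by (simp add: tr_def fun_eq_iff)
next
  fix g X Y assume g: "g \<in> carrier G" and X: "X \<in> vcarrier (Lmod G)" and Y: "Y \<in> vcarrier (Lmod G)"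
  show "act (Lmod G) g (vadd (Lmod G) X Y) = vadd (Lmod G) (act (Lmod G) g X) (act (Lmod G) g Y)"
    by (simp add: tr_def fun_eq_iff)
next
  fix X assume X: "X \<in> vcarrier (Lmod G)"
  then obtain u where u: "u \<in> L0 G" "X = enc u" by auto
  show "act (Lmod G) \<one>\<^bsub>G\<^esub> X = X" using u L0_D(1)[OF u(1)] by (auto simp: tr_def fun_eq_iff)
next
  fix g h X assume g: "g \<in> carrier G" and h: "h \<in> carrier G" and X: "X \<in> vcarrier (Lmod G)"
  have "inv\<^bsub>G\<^esub> (g \<otimes>\<^bsub>G\<^esub> h) \<otimes>\<^bsub>G\<^esub> x = inv\<^bsub>G\<^esub> h \<otimes>\<^bsub>G\<^esub> (inv\<^bsub>G\<^esub> g \<otimes>\<^bsub>G\<^esub> x)" if "x \<in> carrier G" for x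
    using g h that by (simp add: G.inv_mult_group G.m_assoc)
  then show "act (Lmod G) (g \<otimes>\<^bsub>G\<^esub> h) X = act (Lmod G) g (act (Lmod G) h X)"
    using g h by (auto simp: tr_def fun_eq_iff)
qed

end


lemma dist_sum_le: fixes u w :: "'a \<Rightarrow> real"
  assumes u: "u summable_on A" and w: "w summable_on A" and x: "x \<in> A"
  shows "\<bar>u x - w x\<bar> \<le> infsum (\<lambda>x. \<bar>u x + -1 * w x\<bar>) A"
proof -
  have s: "(\<lambda>x. u x + -1 * w x) summable_on A" by (rule summable_on_add[OF u summable_on_cmult_right[OF w]])
  show ?thesis using point_le[OF abs_summ[OF s] _ x] by simp
qed

lemma Lmod_complete: fixes G :: "'g monoid" assumes grp: "group G" shows "complete_vs (Lmod G)"
  unfolding complete_vs_def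
proof (intro allI impI)
  fix X :: "nat \<Rightarrow> ('g \<Rightarrow> real) set set"
  assume h: "(\<forall>i. X i \<in> vcarrier (Lmod G)) \<and> (\<forall>e>0. \<exists>N. \<forall>m\<ge>N. \<forall>n\<ge>N. vnorm (Lmod G) (vsub (Lmod G) (X m) (X n)) < e)"
  define u where "u i = dec (X i)" for i
  have Xi: "X i \<in> enc ` L0 G" for i using h by simp
  have uL: "u i \<in> L0 G" for i using Xi[of i] unfolding u_def by (elim imageE) simp
  have Xu: "X i = enc (u i)" for i using Xi[of i] unfolding u_def by (elim imageE) simp
  have us: "u i summable_on carrier G" for i using L0_D(2)[OF uL] .
  define D where "D m n = infsum (\<lambda>x. \<bar>u m x + -1 * u n x\<bar>) (carrier G)" for m n
  have cau: "\<forall>e>0. \<exists>N. \<forall>m\<ge>N. \<forall>n\<ge>N. D m n < e"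
    using h by (simp add: D_def u_def vsub_def)
  have pt: "\<bar>u m x - u n x\<bar> \<le> D m n" if "x \<in> carrier G" for m n x
    unfolding D_def by (rule dist_sum_le[OF us us that])
  define Lf where "Lf x = (if x \<in> carrier G then lim (\<lambda>i. u i x) else 0)" for x
  have conv: "(\<lambda>i. u i x) \<longlonglongrightarrow> Lf x" if x: "x \<in> carrier G" for x
  proof -
    have "Cauchy (\<lambda>i. u i x)"
      unfolding Cauchy_def
    proof (intro allI impI)
      fix e :: real assume "0 < e"
      then obtain N where N: "\<forall>m\<ge>N. \<forall>n\<ge>N. D m n < e" using cau by blast
      show "\<exists>M. \<forall>m\<ge>M. \<forall>n\<ge>M. dist (u m x) (u n x) < e"
        using N pt[OF x] by (metis dist_real_def le_less_trans)
    qed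
    then show ?thesis using x by (simp add: Lf_def Cauchy_convergent_iff convergent_LIMSEQ_iff)
  qed
  have approx: "(\<lambda>x. \<bar>u m x + -1 * Lf x\<bar>) summable_on carrier G \<and> infsum (\<lambda>x. \<bar>u m x + -1 * Lf x\<bar>) (carrier G) \<le> e"
    if e: "0 < e" and N: "\<forall>m\<ge>N. \<forall>n\<ge>N. D m n < e" and m: "m \<ge> N" for e N m
  proof -
    have fin: "sum (\<lambda>x. \<bar>u m x + -1 * Lf x\<bar>) B \<le> e" if B: "finite B" "B \<subseteq> carrier G" for B
    proof (rule LIMSEQ_le_const2)
      show "(\<lambda>n. sum (\<lambda>x. \<bar>u m x + -1 * u n x\<bar>) B) \<longlonglongrightarrow> sum (\<lambda>x. \<bar>u m x + -1 * Lf x\<bar>) B"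
        by (rule tendsto_sum, intro tendsto_intros) (use conv B in auto)
      show "\<exists>N'. \<forall>n\<ge>N'. sum (\<lambda>x. \<bar>u m x + -1 * u n x\<bar>) B \<le> e"
      proof (intro exI allI impI)
        fix n assume n: "n \<ge> N"
        have s: "(\<lambda>x. u m x + -1 * u n x) summable_on carrier G"
          by (rule summable_on_add[OF us summable_on_cmult_right[OF us]])
        have "sum (\<lambda>x. \<bar>u m x + -1 * u n x\<bar>) B \<le> D m n"
          unfolding D_def by (rule sum_le[OF abs_summ[OF s] _ B]) simp
        also have "\<dots> < e" using N m n by blast
        finally show "sum (\<lambda>x. \<bar>u m x + -1 * u n x\<bar>) B \<le> e" by simp
      qed
    qed
    have s: "(\<lambda>x. \<bar>u m x + -1 * Lf x\<bar>) summable_on carrier G"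
      by (rule nonneg_bdd_above_summable_on) (use fin in \<open>auto simp: bdd_above_def\<close>)
    moreover have "infsum (\<lambda>x. \<bar>u m x + -1 * Lf x\<bar>) (carrier G) \<le> e"
      by (rule infsum_le_finite_sums[OF s fin]) auto
    ultimately show ?thesis by blast
  qed
  obtain N1 where N1: "\<forall>m\<ge>N1. \<forall>n\<ge>N1. D m n < 1" using cau by (meson zero_less_one)
  have s1: "(\<lambda>x. u N1 x + -1 * Lf x) summable_on carrier G"
    using approx[OF _ N1 order_refl] by (auto intro: summ_abs)
  have Ls: "Lf summable_on carrier G"
  proof -
    have "(\<lambda>x. u N1 x + -1 * (u N1 x + -1 * Lf x)) summable_on carrier G"
      by (rule summable_on_add[OF us summable_on_cmult_right[OF s1]])
    then show ?thesis by simp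
  qed
  have Lsum: "infsum Lf (carrier G) = 0"
  proof -
    have "\<bar>infsum Lf (carrier G)\<bar> \<le> e" if e: "0 < e" for e
    proof -
      obtain N where N: "\<forall>m\<ge>N. \<forall>n\<ge>N. D m n < e" using cau e by blast
      have a: "(\<lambda>x. \<bar>u N x + -1 * Lf x\<bar>) summable_on carrier G" "infsum (\<lambda>x. \<bar>u N x + -1 * Lf x\<bar>) (carrier G) \<le> e"
        using approx[OF e N order_refl] by auto
      have sN: "(\<lambda>x. u N x + -1 * Lf x) summable_on carrier G" using a(1) by (rule summ_abs)
      have "infsum (\<lambda>x. u N x + -1 * Lf x) (carrier G) = infsum (u N) (carrier G) + infsum (\<lambda>x. -1 * Lf x) (carrier G)"
        by (rule infsum_add[OF us summable_on_cmult_right[OF Ls]])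
      also have "\<dots> = - infsum Lf (carrier G)"
        using L0_D(3)[OF uL, of N] infsum_cmult_right'[of "-1" Lf "carrier G"] by (simp only:)
      finally have eq: "infsum (\<lambda>x. u N x + -1 * Lf x) (carrier G) = - infsum Lf (carrier G)" .
      have "norm (infsum (\<lambda>x. u N x + -1 * Lf x) (carrier G)) \<le> infsum (\<lambda>x. norm (u N x + -1 * Lf x)) (carrier G)"
        by (rule norm_infsum_bound, rule summable_on_iff_abs_summable_on_real[THEN iffD1, OF sN])
      then show ?thesis using eq a(2) by simp
    qed
    then have "\<bar>infsum Lf (carrier G)\<bar> \<le> 0 + 0" by (rule field_le_epsilon) simp
    then show ?thesis by simp
  qed
  have LL: "Lf \<in> L0 G" unfolding L0_def using Ls Lsum by (simp add: Lf_def)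
  show "\<exists>L\<in>vcarrier (Lmod G). (\<lambda>i. vnorm (Lmod G) (vsub (Lmod G) (X i) L)) \<longlonglongrightarrow> 0"
  proof (intro bexI[of _ "enc Lf"])
    show "enc Lf \<in> vcarrier (Lmod G)" using LL by simp
    show "(\<lambda>i. vnorm (Lmod G) (vsub (Lmod G) (X i) (enc Lf))) \<longlonglongrightarrow> 0"
    proof (rule LIMSEQ_I)
      fix r :: real assume r: "0 < r"
      obtain N where N: "\<forall>m\<ge>N. \<forall>n\<ge>N. D m n < r / 2" using cau r by (meson half_gt_zero)
      show "\<exists>no. \<forall>n\<ge>no. norm (vnorm (Lmod G) (vsub (Lmod G) (X n) (enc Lf)) - 0) < r"
      proof (intro exI allI impI)
        fix n assume n: "n \<ge> N"
        have a: "infsum (\<lambda>x. \<bar>u n x + -1 * Lf x\<bar>) (carrier G) \<le> r / 2"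
          using approx[OF _ N n] r by auto
        have nn: "0 \<le> infsum (\<lambda>x. \<bar>u n x + -1 * Lf x\<bar>) (carrier G)" by (rule infsum_nonneg) simp
        show "norm (vnorm (Lmod G) (vsub (Lmod G) (X n) (enc Lf)) - 0) < r"
          using a nn r by (simp add: vsub_def Xu)
      qed
    qed
  qed
qed



lemma infinite_const: fixes w :: "'a \<Rightarrow> real"
  assumes s: "w summable_on A" and inf: "infinite A" and c: "\<And>x. x \<in> A \<Longrightarrow> w x = c"
  shows "c = 0"
proof (rule ccontr)
  assume "c \<noteq> 0"
  then have cp: "0 < \<bar>c\<bar>" by simp
  define S where "S = infsum (\<lambda>x. \<bar>w x\<bar>) A"
  obtain n where n: "S < of_nat n * \<bar>c\<bar>" using ex_less_of_nat_mult[OF cp] by blast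
  obtain B where B: "finite B" "card B = n" "B \<subseteq> A" using infinite_arbitrarily_large[OF inf] by blast
  have "sum (\<lambda>x. \<bar>w x\<bar>) B \<le> S" unfolding S_def by (rule sum_le[OF abs_summ[OF s] _ B(1,3)]) simp
  moreover have "sum (\<lambda>x. \<bar>w x\<bar>) B = sum (\<lambda>x. \<bar>c\<bar>) B" by (rule sum.cong) (use B c in auto)
  moreover have "sum (\<lambda>x. \<bar>c\<bar>) B = of_nat n * \<bar>c\<bar>" using B by simp
  ultimately show False using n B(2) by linarith
qed

definition delta :: "'g \<Rightarrow> 'g \<Rightarrow> real" where "delta a z = (if z = a then 1 else 0)"

lemma delta_sum: assumes "a \<in> A" shows "delta a summable_on A" "infsum (delta a) A = 1"
proof -
  have e: "infsum (delta a) A = infsum (delta a) {a}"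
    by (rule infsum_cong_neutral) (use assms in \<open>auto simp: delta_def\<close>)
  have "(delta a summable_on A) = (delta a summable_on {a})"
    by (rule summable_on_cong_neutral) (use assms in \<open>auto simp: delta_def\<close>)
  then show "delta a summable_on A" by simp
  show "infsum (delta a) A = 1" using e by (simp add: delta_def)
qed

context
  fixes \<Gamma> :: "'g monoid" and K :: "'k monoid" and \<phi> :: "'g \<Rightarrow> 'k"
  assumes grpG: "group \<Gamma>" and grpK: "group K" and hom: "\<phi> \<in> hom \<Gamma> K"
    and inf: "infinite (kernel \<Gamma> K \<phi>)"
begin

interpretation G: group \<Gamma> by (rule grpG)

abbreviation "LL \<equiv> Lmod \<Gamma>"
abbreviation "CG \<equiv> carrier \<Gamma>"

lemma fixed_zero: assumes X: "X \<in> vcarrier LL" and fx: "\<forall>h\<in>kernel \<Gamma> K \<phi>. act LL h X = X"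
  shows "X = enc (\<lambda>_. 0)"
proof -
  obtain u where u: "u \<in> L0 \<Gamma>" "X = enc u" using X by auto
  have tr: "tr \<Gamma> h u = u" if "h \<in> kernel \<Gamma> K \<phi>" for h using fx that u by simp
  have "u z = 0" for z
  proof (cases "z \<in> CG")
    case True
    define A where "A = (\<lambda>h. inv\<^bsub>\<Gamma>\<^esub> h \<otimes>\<^bsub>\<Gamma>\<^esub> z) ` kernel \<Gamma> K \<phi>"
    have kc: "kernel \<Gamma> K \<phi> \<subseteq> CG" by (auto simp: kernel_def)
    have AC: "A \<subseteq> CG" using kc True by (auto simp: A_def)
    have "inj_on (\<lambda>h. inv\<^bsub>\<Gamma>\<^esub> h \<otimes>\<^bsub>\<Gamma>\<^esub> z) (kernel \<Gamma> K \<phi>)"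
    proof (rule inj_onI)
      fix h1 h2 assume h: "h1 \<in> kernel \<Gamma> K \<phi>" "h2 \<in> kernel \<Gamma> K \<phi>" "inv\<^bsub>\<Gamma>\<^esub> h1 \<otimes>\<^bsub>\<Gamma>\<^esub> z = inv\<^bsub>\<Gamma>\<^esub> h2 \<otimes>\<^bsub>\<Gamma>\<^esub> z"
      have "h1 \<in> CG" "h2 \<in> CG" using h kc by auto
      then have "inv\<^bsub>\<Gamma>\<^esub> h1 = inv\<^bsub>\<Gamma>\<^esub> h2" using h(3) True G.right_cancel[of z "inv\<^bsub>\<Gamma>\<^esub> h1" "inv\<^bsub>\<Gamma>\<^esub> h2"] by simp
      then show "h1 = h2" using h kc by (metis G.inv_inv subsetD)
    qed
    then have Ainf: "infinite A" unfolding A_def using inf finite_imageD by blast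
    have "u a = u z" if aA: "a \<in> A" for a
    proof -
      obtain h where h: "h \<in> kernel \<Gamma> K \<phi>" "a = inv\<^bsub>\<Gamma>\<^esub> h \<otimes>\<^bsub>\<Gamma>\<^esub> z" using aA unfolding A_def by blast
      have "tr \<Gamma> h u z = u z" using tr[OF h(1)] by simp
      then show ?thesis using h True by (simp add: tr_def)
    qed
    moreover have "u summable_on A" by (rule summable_on_subset_banach[OF L0_D(2)[OF u(1)] AC])
    ultimately show ?thesis using infinite_const[OF _ Ainf, of u "u z"] by simp
  next
    case False then show ?thesis using L0_D(1)[OF u(1)] by simp
  qed
  then have "u = (\<lambda>_. 0)" by (rule ext)
  then show ?thesis using u by simp
qed


lemma tup2: "xs \<in> tuples G (Suc 0) \<Longrightarrow> \<exists>a b. xs = [a, b] \<and> a \<in> carrier G \<and> b \<in> carrier G"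
  unfolding tuples_def by (cases xs; cases "tl xs") auto

lemma tup3: "xs \<in> tuples G (Suc (Suc 0)) \<Longrightarrow> \<exists>a b c. xs = [a, b, c]"
  unfolding tuples_def by (cases xs; cases "tl xs"; cases "tl (tl xs)") auto

lemma dL: assumes "a \<in> CG" "b \<in> CG" shows "(\<lambda>z. delta a z + -1 * delta b z) \<in> L0 \<Gamma>"
  unfolding L0_def
proof (intro CollectI conjI allI impI)
  show "delta a z + -1 * delta b z = 0" if "z \<notin> CG" for z using that assms by (auto simp: delta_def)
  show s: "(\<lambda>z. delta a z + -1 * delta b z) summable_on CG"
    by (rule summable_on_add[OF delta_sum(1)[OF assms(1)] summable_on_cmult_right[OF delta_sum(1)[OF assms(2)]]])
  have "infsum (\<lambda>z. delta a z + -1 * delta b z) CG = infsum (delta a) CG + infsum (\<lambda>z. -1 * delta b z) CG"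
    by (rule infsum_add[OF delta_sum(1)[OF assms(1)] summable_on_cmult_right[OF delta_sum(1)[OF assms(2)]]])
  also have "\<dots> = 1 + -1 * 1"
    using delta_sum(2)[OF assms(1)] delta_sum(2)[OF assms(2)] infsum_cmult_right'[of "-1" "delta b" CG] by (simp only:)
  also have "\<dots> = 0" by simp
  finally show "infsum (\<lambda>z. delta a z + -1 * delta b z) CG = 0" .
qed

lemma dL_bound: assumes "a \<in> CG" "b \<in> CG"
  shows "infsum (\<lambda>z. \<bar>delta a z + -1 * delta b z\<bar>) CG \<le> 2"
proof -
  have "infsum (\<lambda>z. \<bar>delta a z + -1 * delta b z\<bar>) CG \<le> infsum (\<lambda>z. delta a z + delta b z) CG"
  proof (rule infsum_mono)
    show "(\<lambda>z. \<bar>delta a z + -1 * delta b z\<bar>) summable_on CG" by (rule abs_summ, rule L0_D(2)[OF dL[OF assms]])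
    show "(\<lambda>z. delta a z + delta b z) summable_on CG" by (rule summable_on_add[OF delta_sum(1)[OF assms(1)] delta_sum(1)[OF assms(2)]])
  qed (auto simp: delta_def)
  also have "\<dots> = 2" using delta_sum[OF assms(1)] delta_sum[OF assms(2)]
    by (simp add: infsum_add[OF delta_sum(1)[OF assms(1)] delta_sum(1)[OF assms(2)]])
  finally show ?thesis .
qed

lemma tr_delta: assumes g: "g \<in> CG" and "a \<in> CG" "b \<in> CG"
  shows "tr \<Gamma> g (\<lambda>z. delta a z + -1 * delta b z) = (\<lambda>z. delta (g \<otimes>\<^bsub>\<Gamma>\<^esub> a) z + -1 * delta (g \<otimes>\<^bsub>\<Gamma>\<^esub> b) z)"
proof
  fix z
  show "tr \<Gamma> g (\<lambda>z. delta a z + -1 * delta b z) z = delta (g \<otimes>\<^bsub>\<Gamma>\<^esub> a) z + -1 * delta (g \<otimes>\<^bsub>\<Gamma>\<^esub> b) z"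
  proof (cases "z \<in> CG")
    case True
    have "(inv\<^bsub>\<Gamma>\<^esub> g \<otimes>\<^bsub>\<Gamma>\<^esub> z = a) = (z = g \<otimes>\<^bsub>\<Gamma>\<^esub> a)" using G.inv_solve_left' assms True by blast
    moreover have "(inv\<^bsub>\<Gamma>\<^esub> g \<otimes>\<^bsub>\<Gamma>\<^esub> z = b) = (z = g \<otimes>\<^bsub>\<Gamma>\<^esub> b)" using G.inv_solve_left' assms True by blast
    ultimately show ?thesis using True by (simp add: tr_def delta_def)
  next
    case False
    then have "z \<noteq> g \<otimes>\<^bsub>\<Gamma>\<^esub> a" "z \<noteq> g \<otimes>\<^bsub>\<Gamma>\<^esub> b" using assms by auto
    then show ?thesis using False by (simp add: tr_def delta_def)
  qed
qed

lemma not_bij: "\<not> infl_bij \<Gamma> K \<phi> LL (Suc 0)"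
proof
  assume bij: "infl_bij \<Gamma> K \<phi> LL (Suc 0)"
  define f' where "f' xs = enc (\<lambda>z. delta (xs ! 1) z + -1 * delta (xs ! 0) z)" for xs :: "'g list"
  have f'Z: "f' \<in> Zb \<Gamma> LL (Suc 0)"
    unfolding Zb_def Cb_def
  proof (intro CollectI conjI ballI)
    fix xs assume xs: "xs \<in> tuples \<Gamma> (Suc 0)"
    then obtain a b where ab: "xs = [a, b]" "a \<in> CG" "b \<in> CG" using tup2 by blast
    show "f' xs \<in> vcarrier LL" using dL[OF ab(3,2)] ab by (simp add: f'_def)
  next
    show "\<exists>C. \<forall>xs\<in>tuples \<Gamma> (Suc 0). vnorm LL (f' xs) \<le> C"
    proof (intro exI ballI)
      fix xs assume xs: "xs \<in> tuples \<Gamma> (Suc 0)"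
      then obtain a b where ab: "xs = [a, b]" "a \<in> CG" "b \<in> CG" using tup2 by blast
      show "vnorm LL (f' xs) \<le> 2" using dL_bound[OF ab(3,2)] ab by (simp add: f'_def)
    qed
  next
    fix g xs assume g: "g \<in> CG" and xs: "xs \<in> tuples \<Gamma> (Suc 0)"
    then obtain a b where ab: "xs = [a, b]" "a \<in> CG" "b \<in> CG" using tup2 by blast
    show "f' (map ((\<otimes>\<^bsub>\<Gamma>\<^esub>) g) xs) = act LL g (f' xs)"
      using tr_delta[OF g ab(3,2)] ab by (simp add: f'_def)
  next
    fix xs assume xs: "xs \<in> tuples \<Gamma> (Suc (Suc 0))"
    then obtain a b c where abc: "xs = [a, b, c]" using tup3 by blast
    have u: "[0..<3] = [0, 1, 2::nat]" by (simp add: upt_rec)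
    show "cobound LL f' xs = vzero LL"
      unfolding cobound_def abc by (simp add: u f'_def fun_eq_iff)
  qed
  define W where "W = fixmod \<Gamma> K \<phi> LL"
  obtain f where f: "f \<in> Zb K W (Suc 0)" and coh: "cohomologous \<Gamma> LL (Suc 0) f' (infl \<phi> f)"
    using bij f'Z unfolding infl_bij_def W_def by blast
  have fz: "f ks = enc (\<lambda>_. 0)" if ks: "ks \<in> tuples K (Suc 0)" for ks
  proof -
    have "f ks \<in> vcarrier W" using f ks by (simp add: Zb_def Cb_def)
    then show ?thesis using fixed_zero by (simp add: W_def fixmod_def)
  qed
  obtain bb where bb: "bb \<in> Cb \<Gamma> LL 0" and bbeq: "\<forall>xs\<in>tuples \<Gamma> (Suc 0). vsub LL (f' xs) (infl \<phi> f xs) = cobound LL bb xs"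
    using coh unfolding cohomologous_def is_cobdry_def by auto
  have one: "[\<one>\<^bsub>\<Gamma>\<^esub>] \<in> tuples \<Gamma> 0" by (simp add: tuples_def)
  define v where "v = dec (bb [\<one>\<^bsub>\<Gamma>\<^esub>])"
  have bb1: "bb [\<one>\<^bsub>\<Gamma>\<^esub>] \<in> vcarrier LL" using bb one by (simp add: Cb_def)
  then have vL: "v \<in> L0 \<Gamma>" and bbv: "bb [\<one>\<^bsub>\<Gamma>\<^esub>] = enc v" by (auto simp: v_def)
  have bx: "bb [x] = enc (tr \<Gamma> x v)" if x: "x \<in> CG" for x
  proof -
    have "bb (map ((\<otimes>\<^bsub>\<Gamma>\<^esub>) x) [\<one>\<^bsub>\<Gamma>\<^esub>]) = act LL x (bb [\<one>\<^bsub>\<Gamma>\<^esub>])"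
      using bb x one unfolding Cb_def by blast
    moreover have "map ((\<otimes>\<^bsub>\<Gamma>\<^esub>) x) [\<one>\<^bsub>\<Gamma>\<^esub>] = [x]" using x by simp
    ultimately show ?thesis using bbv by simp
  qed
  have phi_in: "\<phi> y \<in> carrier K" if "y \<in> CG" for y using hom that by (auto simp: hom_def)
  have key: "delta x x + -1 * delta \<one>\<^bsub>\<Gamma>\<^esub> x = tr \<Gamma> x v x + -1 * v x" if x: "x \<in> CG" for x
  proof -
    have t: "[\<one>\<^bsub>\<Gamma>\<^esub>, x] \<in> tuples \<Gamma> (Suc 0)" using x by (simp add: tuples_def)
    have "map \<phi> [\<one>\<^bsub>\<Gamma>\<^esub>, x] \<in> tuples K (Suc 0)" using x phi_in by (simp add: tuples_def)
    then have i: "infl \<phi> f [\<one>\<^bsub>\<Gamma>\<^esub>, x] = enc (\<lambda>_. 0)" by (simp add: infl_def fz)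
    have u: "[0..<2] = [0, 1::nat]" by (simp add: upt_rec)
    have "vsub LL (f' [\<one>\<^bsub>\<Gamma>\<^esub>, x]) (infl \<phi> f [\<one>\<^bsub>\<Gamma>\<^esub>, x]) = cobound LL bb [\<one>\<^bsub>\<Gamma>\<^esub>, x]" using bbeq t by blast
    then have "enc (\<lambda>z. delta x z + -1 * delta \<one>\<^bsub>\<Gamma>\<^esub> z) = enc (\<lambda>z. tr \<Gamma> x v z + -1 * v z)"
      unfolding i cobound_def using bx[OF x] bbv by (simp add: u vsub_def f'_def)
    then show ?thesis by (simp add: fun_eq_iff)
  qed
  define w where "w z = delta \<one>\<^bsub>\<Gamma>\<^esub> z + -1 * v z" for z
  have wc: "w x = w \<one>\<^bsub>\<Gamma>\<^esub>" if x: "x \<in> CG" for x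
    using key[OF x] x by (simp add: w_def tr_def delta_def)
  have ws: "w summable_on CG" unfolding w_def
    by (rule summable_on_add[OF delta_sum(1)[OF G.one_closed] summable_on_cmult_right[OF L0_D(2)[OF vL]]])
  have "kernel \<Gamma> K \<phi> \<subseteq> CG" by (auto simp: kernel_def)
  then have CGinf: "infinite CG" using inf finite_subset by blast
  have "w \<one>\<^bsub>\<Gamma>\<^esub> = 0" by (rule infinite_const[OF ws CGinf wc]) 
  then have vd: "v x = delta \<one>\<^bsub>\<Gamma>\<^esub> x" if "x \<in> CG" for x using wc[OF that] by (simp add: w_def)
  have "infsum v CG = infsum (delta \<one>\<^bsub>\<Gamma>\<^esub>) CG" by (rule infsum_cong) (simp add: vd)
  then show False using delta_sum(2)[OF G.one_closed] L0_D(3)[OF vL] by simp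
qed

end


lemma part1:
  fixes \<Gamma> :: "'g monoid" and K :: "'k monoid" and \<phi> :: "'g \<Rightarrow> 'k" and V :: "('g, 'v) gmod"
  assumes "group \<Gamma>" "group K" "\<phi> \<in> hom \<Gamma> K" "\<phi> ` carrier \<Gamma> = carrier K"
    "normed_gmod \<Gamma> V" "finite (kernel \<Gamma> K \<phi>)"
  shows "infl_isometric_iso \<Gamma> K \<phi> V n"
proof -
  have ns: "normed_space V" using assms(5) by (simp add: normed_gmod_def)
  have "setting V \<Gamma> K \<phi>" unfolding setting_def setting_axioms_def vsp_def using ns assms by blast
  then interpret S: setting V \<Gamma> K \<phi> .
  show ?thesis by (rule S.infl_iso)
qed

lemma part3:
  fixes \<Gamma> :: "'g monoid" and K :: "'k monoid" and \<phi> :: "'g \<Rightarrow> 'k"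
  assumes "group \<Gamma>" "group K" "\<phi> \<in> hom \<Gamma> K" "infinite (kernel \<Gamma> K \<phi>)"
  shows "\<not> infl_bij \<Gamma> K \<phi> (Lmod \<Gamma>) 1"
  using not_bij[OF assms] by simp

theorem theoremB:
  fixes \<Gamma> :: "'g monoid" and K :: "'k monoid" and \<phi> :: "'g \<Rightarrow> 'k"
  assumes "group \<Gamma>" and "group K" and "\<phi> \<in> hom \<Gamma> K" and "\<phi> ` carrier \<Gamma> = carrier K"
  shows
    "(finite (kernel \<Gamma> K \<phi>) \<longrightarrow>
        (\<forall>V :: ('g, 'v) gmod. normed_gmod \<Gamma> V \<longrightarrow> (\<forall>n. infl_isometric_iso \<Gamma> K \<phi> V n))) \<and>
     (finite (kernel \<Gamma> K \<phi>) \<longrightarrow>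
        (\<forall>V :: ('g, 'w) gmod. banach_gmod \<Gamma> V \<longrightarrow> infl_bij \<Gamma> K \<phi> V 1)) \<and>
     ((\<forall>V :: ('g, ('g \<Rightarrow> real) set set) gmod. normed_gmod \<Gamma> V \<longrightarrow> (\<forall>n. infl_isometric_iso \<Gamma> K \<phi> V n))
        \<longrightarrow> finite (kernel \<Gamma> K \<phi>)) \<and>
     ((\<forall>V :: ('g, ('g \<Rightarrow> real) set set) gmod. banach_gmod \<Gamma> V \<longrightarrow> infl_bij \<Gamma> K \<phi> V 1)
        \<longrightarrow> finite (kernel \<Gamma> K \<phi>))"
proof (intro conjI impI allI)
  fix V :: "('g, 'v) gmod" and n
  assume "finite (kernel \<Gamma> K \<phi>)" "normed_gmod \<Gamma> V"
  then show "infl_isometric_iso \<Gamma> K \<phi> V n" using part1 assms by blast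
next
  fix V :: "('g, 'w) gmod"
  assume "finite (kernel \<Gamma> K \<phi>)" "banach_gmod \<Gamma> V"
  then have "infl_isometric_iso \<Gamma> K \<phi> V 1" using part1 assms by (auto simp: banach_gmod_def)
  then show "infl_bij \<Gamma> K \<phi> V 1" by (simp add: infl_isometric_iso_def)
next
  assume h: "\<forall>V :: ('g, ('g \<Rightarrow> real) set set) gmod. normed_gmod \<Gamma> V \<longrightarrow> (\<forall>n. infl_isometric_iso \<Gamma> K \<phi> V n)"
  show "finite (kernel \<Gamma> K \<phi>)"
  proof (rule ccontr)
    assume inf: "infinite (kernel \<Gamma> K \<phi>)"
    have "infl_isometric_iso \<Gamma> K \<phi> (Lmod \<Gamma>) 1" using h Lmod_normed_gmod[OF assms(1)] by blast
    then have "infl_bij \<Gamma> K \<phi> (Lmod \<Gamma>) 1" by (simp add: infl_isometric_iso_def)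
    then show False using part3[OF assms(1-3) inf] by simp
  qed
next
  assume h: "\<forall>V :: ('g, ('g \<Rightarrow> real) set set) gmod. banach_gmod \<Gamma> V \<longrightarrow> infl_bij \<Gamma> K \<phi> V 1"
  show "finite (kernel \<Gamma> K \<phi>)"
  proof (rule ccontr)
    assume inf: "infinite (kernel \<Gamma> K \<phi>)"
    have "banach_gmod \<Gamma> (Lmod \<Gamma>)"
      unfolding banach_gmod_def using Lmod_normed_gmod[OF assms(1)] Lmod_complete[OF assms(1)] by blast
    then have "infl_bij \<Gamma> K \<phi> (Lmod \<Gamma>) 1" using h by blast
    then show False using part3[OF assms(1-3) inf] by simp
  qed
qed

end
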